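(* Let $\Lambda\in P^+$ and let $\beta=\alpha_{j_1}+\dots+\alpha_{j_n}$ with $j_1,\dots,j_n\in I$ pairwise distinct. Then the center $\mathcal{Z}$ of $R^\Lambda(\beta)$ satisfies $\mathcal{Z}\subseteq\bigoplus_{\mu\in I^\beta}\mathcal{P}_\mu e(\mu)$, where $\mathcal{P}_\mu e(\mu)$ denotes the $\mathbf{k}$-span in $R^\Lambda(\beta)$ of all elements $x_1^{t_1}\cdots x_n^{t_n}e(\mu)$, $t_i\in\mathbb{Z}_{\ge0}$.
   Context: Fix a field $\mathbf{k}$ of characteristic $\neq 2$. A Cartan superdatum consists of an index set $I$; a symmetrizable generalized Cartan matrix $A=(a_{ij})_{i,j\in I}$ ($a_{ii}=2$, $a_{ij}\le 0$ for $i\ne j$, $a_{ij}=0\iff a_{ji}=0$, positive integers $d_i$ with $d_ia_{ij}=d_ja_{ji}$); a free abelian group $P$; $\mathbb{Z}$-linearly independent $\alpha_i\in P$; $h_i\in\mathrm{Hom}_{\mathbb{Z}}(P,\mathbb{Z})$ with $\langle h_i,\alpha_j\rangle=a_{ij}$; and $I=I_{\mathrm{even}}\sqcup I_{\mathrm{odd}}$ with $a_{ij}\in2\mathbb{Z}$ whenever $i\in I_{\mathrm{odd}}$. A symmetric bilinear form $(\cdot|\cdot)$ on $P$ satisfies $(\alpha_i|\lambda)=d_i\langle h_i,\lambda\rangle$. Parity $\mathrm{p}(i)=1$ if $i\in I_{\mathrm{odd}}$, $0$ otherwise. $P^+=\{\Lambda:\langle h_i,\Lambda\rangle\ge0\ \forall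 i\}$; $I^\beta=\{\nu\in I^n:\sum_s\alpha_{\nu_s}=\beta\}$. For $\nu\in I^n$, $\mathcal{P}_\nu=\mathbf{k}\langle\mathrm{x}_1,\dots,\mathrm{x}_n\rangle/(\mathrm{x}_a\mathrm{x}_b-(-1)^{\mathrm{p}(\nu_a)\mathrm{p}(\nu_b)}\mathrm{x}_b\mathrm{x}_a)$. Fix $Q_{ij}(\mathrm{x}_1,\mathrm{x}_2)=\sum_{r,s}t_{i,j;(r,s)}\mathrm{x}_1^r\mathrm{x}_2^s\in\mathcal{P}_{(i,j)}$ with: $t_{i,j;(r,s)}\ne0$ only if $-2(\alpha_i|\alpha_j)-r(\alpha_i|\alpha_i)-s(\alpha_j|\alpha_j)=0$; $t_{i,j;(r,s)}=t_{j,i;(s,r)}$; $t_{i,j;(-a_{ij},0)}\in\mathbf{k}^\times$; $t_{i,j;(r,s)}=0$ if $i=j$ or ($i\in I_{\mathrm{odd}}$ and $r$ odd). $R(\beta)$ is the $\mathbf{k}$-algebra with generators $e(\nu)$ ($\nu\in I^\beta$), $x_1,\dots,x_n$, $\tau_1,\dots,\tau_{n-1}$ and relations: $e(\mu)e(\nu)=\delta_{\mu\nu}e(\nu)$, $\sum_\nu e(\nu)=1$; $x_px_qe(\nu)=(-1)^{\mathrm{p}(\nu_p)\mathrm{p}(\nu_q)}x_qx_pe(\nu)$ ($p\ne q$); $x_pe(\nu)=e(\nu)x_p$; $\tau_ae(\nu)=e(s_a\nu)\tau_a$; $\tau_ax_pe(\nu)=(-1)^{\mathrm{p}(\nu_p)\mathrm{p}(\nu_a)\mathrm{p}(\nu_{a+1})}x_p\tau_ae(\nu)$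 ($p\ne a,a+1$); $(\tau_ax_{a+1}-(-1)^{\mathrm{p}(\nu_a)\mathrm{p}(\nu_{a+1})}x_a\tau_a)e(\nu)=(x_{a+1}\tau_a-(-1)^{\mathrm{p}(\nu_a)\mathrm{p}(\nu_{a+1})}\tau_ax_a)e(\nu)=\delta_{\nu_a,\nu_{a+1}}e(\nu)$; $\tau_a^2e(\nu)=Q_{\nu_a,\nu_{a+1}}(x_a,x_{a+1})e(\nu)$; $\tau_a\tau_be(\nu)=(-1)^{\mathrm{p}(\nu_a)\mathrm{p}(\nu_{a+1})\mathrm{p}(\nu_b)\mathrm{p}(\nu_{b+1})}\tau_b\tau_ae(\nu)$ ($|a-b|>1$); $(\tau_{a+1}\tau_a\tau_{a+1}-\tau_a\tau_{a+1}\tau_a)e(\nu)$ equals $\frac{Q_{\nu_a,\nu_{a+1}}(x_{a+2},x_{a+1})-Q_{\nu_a,\nu_{a+1}}(x_a,x_{a+1})}{x_{a+2}-x_a}e(\nu)$ if $\nu_a=\nu_{a+2}\in I_{\mathrm{even}}$, $(-1)^{\mathrm{p}(\nu_{a+1})}(x_{a+2}-x_a)\frac{Q_{\nu_a,\nu_{a+1}}(x_{a+2},x_{a+1})-Q_{\nu_a,\nu_{a+1}}(x_a,x_{a+1})}{x_{a+2}^2-x_a^2}e(\nu)$ if $\nu_a=\nu_{a+2}\in I_{\mathrm{odd}}$, $0$ otherwise; $s_a=(a,a+1)$, and $\mathfrak{S}_n$ acts on $I^n$ by $(w\nu)_j=\nu_{w^{-1}(j)}$. For $\Lambda\in P^+$,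 $R^\Lambda(\beta)=R(\beta)/\langle\sum_{\nu}x_1^{\langle h_{\nu_1},\Lambda\rangle}e(\nu)\rangle$. *)

theory Defs
  imports Main
begin

text \<open>Generators of the free algebra: idempotents E nu, dots X p, crossings T a
  (positions are 1-based, as in the paper).\<close>
datatype 'i gen = E "'i list" | X nat | T nat

text \<open>Elements of the free associative algebra: functions from words to scalars
  (the genuine free algebra consists of the finitely supported ones).\<close>
type_synonym ('i, 'k) fa = "'i gen list \<Rightarrow> 'k"

definition fin_supp :: "('i, 'k::zero) fa \<Rightarrow> bool" where
  "fin_supp f \<longleftrightarrow> finite {w. f w \<noteq> 0}"

definition fa_word :: "'i gen list \<Rightarrow> ('i, 'k::{zero,one}) fa" where
  "fa_word w = (\<lambda>v. if v = w then 1 else 0)"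

definition fa_zero :: "('i, 'k::zero) fa" where
  "fa_zero = (\<lambda>_. 0)"

definition fa_add :: "('i, 'k::plus) fa \<Rightarrow> ('i, 'k) fa \<Rightarrow> ('i, 'k) fa" where
  "fa_add f g = (\<lambda>w. f w + g w)"

definition fa_sub :: "('i, 'k::minus) fa \<Rightarrow> ('i, 'k) fa \<Rightarrow> ('i, 'k) fa" where
  "fa_sub f g = (\<lambda>w. f w - g w)"

definition fa_smul :: "'k::times \<Rightarrow> ('i, 'k) fa \<Rightarrow> ('i, 'k) fa" where
  "fa_smul c f = (\<lambda>w. c * f w)"

definition fa_mul :: "('i, 'k::comm_semiring_1) fa \<Rightarrow> ('i, 'k) fa \<Rightarrow> ('i, 'k) fa" where
  "fa_mul f g = (\<lambda>w. \<Sum>k\<le>length w. f (take k w) * g (drop k w))"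

definition fa_sum :: "'a set \<Rightarrow> ('a \<Rightarrow> ('i, 'k::comm_monoid_add) fa) \<Rightarrow> ('i, 'k) fa" where
  "fa_sum A F = (\<lambda>w. \<Sum>x\<in>A. F x w)"

inductive_set ideal_gen :: "('i, 'k::comm_ring_1) fa set \<Rightarrow> ('i, 'k) fa set"
  for Rs :: "('i, 'k) fa set" where
  base: "r \<in> Rs \<Longrightarrow> r \<in> ideal_gen Rs"
| zero: "fa_zero \<in> ideal_gen Rs"
| add: "a \<in> ideal_gen Rs \<Longrightarrow> b \<in> ideal_gen Rs \<Longrightarrow> fa_add a b \<in> ideal_gen Rs"
| smul: "a \<in> ideal_gen Rs \<Longrightarrow> fa_smul c a \<in> ideal_gen Rs"
| mul: "a \<in> ideal_gen Rs \<Longrightarrow> fin_supp u \<Longrightarrow> fin_supp v \<Longrightarrow>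
        fa_mul (fa_mul u a) v \<in> ideal_gen Rs"

definition sg :: "bool \<Rightarrow> 'k::ring_1" where
  "sg b = (if b then -1 else 1)"

definition at :: "'i list \<Rightarrow> nat \<Rightarrow> 'i" where
  "at \<nu> a = \<nu> ! (a - 1)"

definition swp :: "nat \<Rightarrow> 'i list \<Rightarrow> 'i list" where
  "swp a \<nu> = \<nu>[a - 1 := \<nu> ! a, a := \<nu> ! (a - 1)]"

text \<open>Q_{i,j}(x_p, x_q) e(nu).\<close>
definition Qe :: "('i \<Rightarrow> 'i \<Rightarrow> nat \<Rightarrow> nat \<Rightarrow> 'k::comm_ring_1) \<Rightarrow> 'i \<Rightarrow> 'i \<Rightarrow> nat \<Rightarrow> nat
     \<Rightarrow> 'i list \<Rightarrow> ('i, 'k) fa" where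
  "Qe t i j p q \<nu> = fa_sum {(r, s). t i j r s \<noteq> 0}
     (\<lambda>(r, s). fa_smul (t i j r s) (fa_word (replicate r (X p) @ replicate s (X q) @ [E \<nu>])))"

text \<open>Even case: (Q(x_{a+2},x_{a+1}) - Q(x_a,x_{a+1}))/(x_{a+2}-x_a) e(nu), written out
  via (X^r - Y^r)/(X - Y) = sum_{k<r} X^k Y^(r-1-k).\<close>
definition braid_even :: "('i \<Rightarrow> 'i \<Rightarrow> nat \<Rightarrow> nat \<Rightarrow> 'k::comm_ring_1) \<Rightarrow> 'i \<Rightarrow> 'i \<Rightarrow> nat
     \<Rightarrow> 'i list \<Rightarrow> ('i, 'k) fa" where
  "braid_even t i j a \<nu> = fa_sum {(r, s). t i j r s \<noteq> 0}
     (\<lambda>(r, s). fa_smul (t i j r s) (fa_sum {..<r} (\<lambda>k.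
        fa_word (replicate k (X (a + 2)) @ replicate (r - 1 - k) (X a)
                 @ replicate s (X (a + 1)) @ [E \<nu>]))))"

text \<open>Odd case: (x_{a+2}-x_a)(Q(x_{a+2},x_{a+1}) - Q(x_a,x_{a+1}))/(x_{a+2}^2-x_a^2) e(nu)
  (without the sign), using that only even r occur, and
  (X^(2m) - Y^(2m))/(X^2 - Y^2) = sum_{k<m} X^(2k) Y^(2(m-1-k)).\<close>
definition braid_odd :: "('i \<Rightarrow> 'i \<Rightarrow> nat \<Rightarrow> nat \<Rightarrow> 'k::comm_ring_1) \<Rightarrow> 'i \<Rightarrow> 'i \<Rightarrow> nat
     \<Rightarrow> 'i list \<Rightarrow> ('i, 'k) fa" where
  "braid_odd t i j a \<nu> = fa_sum {(r, s). t i j r s \<noteq> 0}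
     (\<lambda>(r, s). fa_smul (t i j r s) (fa_sum {..<r div 2} (\<lambda>k.
        let w = replicate (2 * k) (X (a + 2)) @ replicate (r - 2 - 2 * k) (X a)
                 @ replicate s (X (a + 1)) @ [E \<nu>]
        in fa_sub (fa_word (X (a + 2) # w)) (fa_word (X a # w)))))"

text \<open>Defining relations of the cyclotomic quiver Hecke superalgebra R^Lambda(beta),
  with n = height, Ib = I^beta, lam i = <h_i, Lambda>.  Generators E nu with nu not in
  I^beta, X p with p not in 1..n, T a with a not in 1..n-1 are set to zero (they do
  not exist in the paper's presentation).\<close>
definition cyc_rels :: "('i \<Rightarrow> bool) \<Rightarrow> ('i \<Rightarrow> 'i \<Rightarrow> nat \<Rightarrow> nat \<Rightarrow> 'k::comm_ring_1) \<Rightarrow> nat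
     \<Rightarrow> 'i list set \<Rightarrow> ('i \<Rightarrow> nat) \<Rightarrow> ('i, 'k) fa set" where
  "cyc_rels podd t n Ib lam =
     {fa_sub (fa_word [E \<mu>, E \<nu>]) (if \<mu> = \<nu> then fa_word [E \<nu>] else fa_zero) | \<mu> \<nu>.
        \<mu> \<in> Ib \<and> \<nu> \<in> Ib}
   \<union> {fa_sub (fa_sum Ib (\<lambda>\<nu>. fa_word [E \<nu>])) (fa_word [])}
   \<union> {fa_sub (fa_word [X p, X q, E \<nu>])
        (fa_smul (sg (podd (at \<nu> p) \<and> podd (at \<nu> q))) (fa_word [X q, X p, E \<nu>])) | p q \<nu>.
        \<nu> \<in> Ib \<and> p \<in> {1..n} \<and> q \<in> {1..n} \<and> p \<noteq> q}
   \<union> {fa_sub (fa_word [X p, E \<nu>]) (fa_word [E \<nu>, X p]) | p \<nu>. \<nu> \<in> Ib \<and> p \<in> {1..n}}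
   \<union> {fa_sub (fa_word [T a, E \<nu>]) (fa_word [E (swp a \<nu>), T a]) | a \<nu>.
        \<nu> \<in> Ib \<and> 1 \<le> a \<and> a + 1 \<le> n}
   \<union> {fa_sub (fa_word [T a, X p, E \<nu>])
        (fa_smul (sg (podd (at \<nu> p) \<and> podd (at \<nu> a) \<and> podd (at \<nu> (a + 1))))
           (fa_word [X p, T a, E \<nu>])) | a p \<nu>.
        \<nu> \<in> Ib \<and> 1 \<le> a \<and> a + 1 \<le> n \<and> p \<in> {1..n} \<and> p \<noteq> a \<and> p \<noteq> a + 1}
   \<union> {fa_sub (fa_sub (fa_word [T a, X (a + 1), E \<nu>])
        (fa_smul (sg (podd (at \<nu> a) \<and> podd (at \<nu> (a + 1)))) (fa_word [X a, T a, E \<nu>])))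
        (if at \<nu> a = at \<nu> (a + 1) then fa_word [E \<nu>] else fa_zero) | a \<nu>.
        \<nu> \<in> Ib \<and> 1 \<le> a \<and> a + 1 \<le> n}
   \<union> {fa_sub (fa_sub (fa_word [X (a + 1), T a, E \<nu>])
        (fa_smul (sg (podd (at \<nu> a) \<and> podd (at \<nu> (a + 1)))) (fa_word [T a, X a, E \<nu>])))
        (if at \<nu> a = at \<nu> (a + 1) then fa_word [E \<nu>] else fa_zero) | a \<nu>.
        \<nu> \<in> Ib \<and> 1 \<le> a \<and> a + 1 \<le> n}
   \<union> {fa_sub (fa_word [T a, T a, E \<nu>]) (Qe t (at \<nu> a) (at \<nu> (a + 1)) a (a + 1) \<nu>) | a \<nu>.
        \<nu> \<in> Ib \<and> 1 \<le> a \<and> a + 1 \<le> n}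
   \<union> {fa_sub (fa_word [T a, T b, E \<nu>])
        (fa_smul (sg (podd (at \<nu> a) \<and> podd (at \<nu> (a + 1)) \<and> podd (at \<nu> b) \<and> podd (at \<nu> (b + 1))))
           (fa_word [T b, T a, E \<nu>])) | a b \<nu>.
        \<nu> \<in> Ib \<and> 1 \<le> a \<and> a + 1 \<le> n \<and> 1 \<le> b \<and> b + 1 \<le> n \<and> (a + 1 < b \<or> b + 1 < a)}
   \<union> {fa_sub (fa_sub (fa_word [T (a + 1), T a, T (a + 1), E \<nu>]) (fa_word [T a, T (a + 1), T a, E \<nu>]))
        (if at \<nu> a = at \<nu> (a + 2) \<and> \<not> podd (at \<nu> a)
         then braid_even t (at \<nu> a) (at \<nu> (a + 1)) a \<nu>
         else if at \<nu> a = at \<nu> (a + 2) \<and> podd (at \<nu> a)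
         then fa_smul (sg (podd (at \<nu> (a + 1)))) (braid_odd t (at \<nu> a) (at \<nu> (a + 1)) a \<nu>)
         else fa_zero) | a \<nu>.
        \<nu> \<in> Ib \<and> 1 \<le> a \<and> a + 2 \<le> n}
   \<union> (if n = 0 then {} else
       {fa_sum Ib (\<lambda>\<nu>. fa_word (replicate (lam (at \<nu> 1)) (X 1) @ [E \<nu>]))})
   \<union> {fa_word [E \<nu>] | \<nu>. \<nu> \<notin> Ib}
   \<union> {fa_word [X p] | p. p \<notin> {1..n}}
   \<union> {fa_word [T a] | a. \<not> (1 \<le> a \<and> a + 1 \<le> n)}"

definition in_center :: "('i, 'k::comm_ring_1) fa set \<Rightarrow> ('i, 'k) fa \<Rightarrow> bool" where
  "in_center Rs z \<longleftrightarrow> fin_supp z \<and>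
     (\<forall>u. fin_supp u \<longrightarrow> fa_sub (fa_mul u z) (fa_mul z u) \<in> ideal_gen Rs)"

definition xmono :: "nat list \<Rightarrow> 'i gen list" where
  "xmono ts = concat (map (\<lambda>p. replicate (ts ! (p - 1)) (X p)) [1..<length ts + 1])"

definition zsc :: "int \<Rightarrow> 'p::ab_group_add \<Rightarrow> 'p" where
  "zsc c x = (if c \<ge> 0 then (\<Sum>_<nat c. x) else - (\<Sum>_<nat (- c). x))"

end

theory Submission
  imports Defs "HOL-Library.Multiset"
begin


definition wrap :: "'i gen list \<Rightarrow> 'i gen list \<Rightarrow> ('i,'k::comm_semiring_1) fa \<Rightarrow> ('i,'k) fa" where
  "wrap p s f = (\<lambda>w. if (\<exists>m. w = p @ m @ s) then f (THE m. w = p @ m @ s) else 0)"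

lemma fa_mul_word_left:
  "fa_mul (fa_word p) f = (\<lambda>w. if (\<exists>m. w = p @ m) then f (drop (length p) w) else 0)"
proof
  fix w :: "'a gen list"
  have "fa_mul (fa_word p) f w = (\<Sum>k\<le>length w. (if k = length p then (if take k w = p then f (drop k w) else 0) else 0))"
    unfolding fa_mul_def fa_word_def
    by (rule sum.cong) auto
  also have "\<dots> = (if length p \<le> length w then (if take (length p) w = p then f (drop (length p) w) else 0) else 0)"
    by (simp add: sum.delta)
  also have "\<dots> = (if (\<exists>m. w = p @ m) then f (drop (length p) w) else 0)"
    by (metis append_eq_conv_conj append_take_drop_id le_add1 length_append)
  finally show "fa_mul (fa_word p) f w = (if (\<exists>m. w = p @ m) then f (drop (length p) w) else 0)" .
qed

lemma fa_mul_word_right: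
  "fa_mul g (fa_word s) = (\<lambda>w. if (\<exists>m. w = m @ s) then g (take (length w - length s) w) else 0)"
proof
  fix w :: "'a gen list"
  have "fa_mul g (fa_word s) w = (\<Sum>k\<le>length w. (if k = length w - length s then (if drop k w = s then g (take k w) else 0) else 0))"
    unfolding fa_mul_def fa_word_def
    by (rule sum.cong) auto
  also have "\<dots> = (if drop (length w - length s) w = s then g (take (length w - length s) w) else 0)"
    by (simp add: sum.delta)
  also have "\<dots> = (if (\<exists>m. w = m @ s) then g (take (length w - length s) w) else 0)"
  proof -
    have "drop (length w - length s) w = s \<longleftrightarrow> (\<exists>m. w = m @ s)"
    proof
      assume "drop (length w - length s) w = s"
      then show "\<exists>m. w = m @ s" by (metis append_take_drop_id)
    next
      assume "\<exists>m. w = m @ s"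
      then obtain m where "w = m @ s" by blast
      then show "drop (length w - length s) w = s" by simp
    qed
    then show ?thesis by simp
  qed
  finally show "fa_mul g (fa_word s) w = (if (\<exists>m. w = m @ s) then g (take (length w - length s) w) else 0)" .
qed

lemma wrap_eq: "fa_mul (fa_mul (fa_word p) f) (fa_word s) = wrap p s f"
proof
  fix w :: "'a gen list"
  show "fa_mul (fa_mul (fa_word p) f) (fa_word s) w = wrap p s f w"
  proof (cases "\<exists>m. w = p @ m @ s")
    case True
    then obtain m where m: "w = p @ m @ s" by blast
    have th: "(THE m. w = p @ m @ s) = m" using m by auto
    show ?thesis unfolding wrap_def fa_mul_word_left fa_mul_word_right using m th by auto
  next
    case False
    have "\<not> ((\<exists>m'. w = m' @ s) \<and> (\<exists>m. take (length w - length s) w = p @ m))"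
    proof
      assume "(\<exists>m'. w = m' @ s) \<and> (\<exists>m. take (length w - length s) w = p @ m)"
      then obtain m' m where a: "w = m' @ s" and b: "take (length w - length s) w = p @ m" by blast
      from a have "take (length w - length s) w = m'" by simp
      with a b False show False by auto
    qed
    then show ?thesis unfolding wrap_def fa_mul_word_left fa_mul_word_right using False
      by auto
  qed
qed


lemma fin_supp_word: "fin_supp (fa_word w :: ('i,'k::comm_semiring_1) fa)"
proof -
  have "{v. (fa_word w :: ('i,'k) fa) v \<noteq> 0} \<subseteq> {w}" by (auto simp: fa_word_def)
  then show ?thesis unfolding fin_supp_def by (rule finite_subset) simp
qed

lemma J_wrap: "a \<in> ideal_gen Rs \<Longrightarrow> wrap p s a \<in> ideal_gen Rs"
  using ideal_gen.mul[OF _ fin_supp_word fin_supp_word] wrap_eq by metis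

lemma fa_sub_as_add: "fa_sub a (b :: ('i,'k::comm_ring_1) fa) = fa_add a (fa_smul (-1) b)"
  by (auto simp: fa_sub_def fa_add_def fa_smul_def)

lemma J_sub: "a \<in> ideal_gen Rs \<Longrightarrow> b \<in> ideal_gen Rs \<Longrightarrow> fa_sub a b \<in> ideal_gen Rs"
  by (simp add: fa_sub_as_add ideal_gen.add ideal_gen.smul)

lemma J_sum: "(\<And>x. x \<in> A \<Longrightarrow> F x \<in> ideal_gen Rs) \<Longrightarrow> fa_sum A F \<in> ideal_gen Rs"
proof (cases "finite A")
  case False
  then have "fa_sum A F = fa_zero" by (simp add: fa_sum_def fa_zero_def)
  then show ?thesis by (simp add: ideal_gen.zero)
next
  case True
  assume h: "\<And>x. x \<in> A \<Longrightarrow> F x \<in> ideal_gen Rs"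
  from True h show ?thesis
  proof (induction A rule: finite_induct)
    case empty
    have "fa_sum {} F = fa_zero" by (simp add: fa_sum_def fa_zero_def)
    then show ?case by (simp add: ideal_gen.zero)
  next
    case (insert x A)
    have "fa_sum (insert x A) F = fa_add (F x) (fa_sum A F)"
      using insert.hyps by (auto simp: fa_sum_def fa_add_def)
    then show ?case using insert by (simp add: ideal_gen.add)
  qed
qed

lemma wrap_sub: "wrap p s (fa_sub f g) = fa_sub (wrap p s f) (wrap p s (g :: ('i,'k::comm_ring_1) fa))"
  by (auto simp: fun_eq_iff wrap_def fa_sub_def)
lemma wrap_add: "wrap p s (fa_add f g) = fa_add (wrap p s f) (wrap p s g)"
  by (auto simp: fun_eq_iff wrap_def fa_add_def)
lemma wrap_smul: "wrap p s (fa_smul c f) = fa_smul c (wrap p s f)"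
  by (auto simp: fun_eq_iff wrap_def fa_smul_def)
lemma wrap_zero: "wrap p s fa_zero = fa_zero"
  by (auto simp: fun_eq_iff wrap_def fa_zero_def)
lemma wrap_sum: "wrap p s (fa_sum A F) = fa_sum A (\<lambda>x. wrap p s (F x))"
  by (auto simp: fun_eq_iff wrap_def fa_sum_def)
lemma wrap_word: "wrap p s (fa_word w) = fa_word (p @ w @ s)"
proof
  fix v
  show "wrap p s (fa_word w) v = fa_word (p @ w @ s) v"
  proof (cases "\<exists>m. v = p @ m @ s")
    case True
    then obtain m where m: "v = p @ m @ s" by blast
    have th: "(THE m. v = p @ m @ s) = m" using m by auto
    show ?thesis using m th by (auto simp: fun_eq_iff wrap_def fa_word_def)
  next
    case False
    then show ?thesis by (auto simp: fun_eq_iff wrap_def fa_word_def)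
  qed
qed

lemmas wrap_simps = wrap_sub wrap_add wrap_smul wrap_zero wrap_sum wrap_word

definition cg :: "('i,'k::comm_ring_1) fa set \<Rightarrow> ('i,'k) fa \<Rightarrow> ('i,'k) fa \<Rightarrow> bool" where
  "cg Rs f g \<longleftrightarrow> fa_sub f g \<in> ideal_gen Rs"

lemma cg_refl: "cg Rs f f"
proof -
  have "fa_sub f f = fa_zero" by (auto simp: fa_sub_def fa_zero_def)
  then show ?thesis by (simp add: cg_def ideal_gen.zero)
qed

lemma cg_sym: "cg Rs f g \<Longrightarrow> cg Rs g f"
proof -
  have "fa_sub g f = fa_smul (-1) (fa_sub f g)" by (auto simp: fa_sub_def fa_smul_def)
  then show "cg Rs f g \<Longrightarrow> cg Rs g f" by (simp add: cg_def ideal_gen.smul)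
qed

lemma cg_trans: "cg Rs f g \<Longrightarrow> cg Rs g h \<Longrightarrow> cg Rs f h"
proof -
  have "fa_sub f h = fa_add (fa_sub f g) (fa_sub g h)" by (auto simp: fa_sub_def fa_add_def)
  then show "cg Rs f g \<Longrightarrow> cg Rs g h \<Longrightarrow> cg Rs f h" by (simp add: cg_def ideal_gen.add)
qed

lemma cg_add: "cg Rs f f' \<Longrightarrow> cg Rs g g' \<Longrightarrow> cg Rs (fa_add f g) (fa_add f' g')"
proof -
  have "fa_sub (fa_add f g) (fa_add f' g') = fa_add (fa_sub f f') (fa_sub g g')"
    by (auto simp: fa_sub_def fa_add_def)
  then show "cg Rs f f' \<Longrightarrow> cg Rs g g' \<Longrightarrow> cg Rs (fa_add f g) (fa_add f' g')"
    by (simp add: cg_def ideal_gen.add)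
qed

lemma cg_smul: "cg Rs f f' \<Longrightarrow> cg Rs (fa_smul c f) (fa_smul c f')"
proof -
  have "fa_sub (fa_smul c f) (fa_smul c f') = fa_smul c (fa_sub f f')"
    by (auto simp: fa_sub_def fa_smul_def algebra_simps)
  then show "cg Rs f f' \<Longrightarrow> cg Rs (fa_smul c f) (fa_smul c f')"
    by (simp add: cg_def ideal_gen.smul)
qed

lemma cg_sum: "(\<And>x. x \<in> A \<Longrightarrow> cg Rs (F x) (G x)) \<Longrightarrow> cg Rs (fa_sum A F) (fa_sum A G)"
proof -
  have "fa_sub (fa_sum A F) (fa_sum A G) = fa_sum A (\<lambda>x. fa_sub (F x) (G x))"
    by (auto simp: fa_sub_def fa_sum_def sum_subtractf)
  then show "(\<And>x. x \<in> A \<Longrightarrow> cg Rs (F x) (G x)) \<Longrightarrow> cg Rs (fa_sum A F) (fa_sum A G)"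
    unfolding cg_def by (simp add: J_sum)
qed

lemma cg_wrap: "cg Rs f g \<Longrightarrow> cg Rs (wrap p s f) (wrap p s g)"
  unfolding cg_def by (metis J_wrap wrap_sub)

lemma cg_rel: "fa_sub f g \<in> Rs \<Longrightarrow> cg Rs f g"
  by (simp add: cg_def ideal_gen.base)

lemma cg_rel0: "r \<in> Rs \<Longrightarrow> cg Rs r fa_zero"
proof -
  have "fa_sub r fa_zero = r" by (auto simp: fa_sub_def fa_zero_def)
  then show "r \<in> Rs \<Longrightarrow> cg Rs r fa_zero" by (simp add: cg_def ideal_gen.base)
qed

inductive_set spn :: "'i gen list set \<Rightarrow> ('i,'k::comm_ring_1) fa set" for B where
  zero: "fa_zero \<in> spn B"
| base: "b \<in> B \<Longrightarrow> fa_word b \<in> spn B"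
| add: "f \<in> spn B \<Longrightarrow> g \<in> spn B \<Longrightarrow> fa_add f g \<in> spn B"
| smul: "f \<in> spn B \<Longrightarrow> fa_smul c f \<in> spn B"

definition GS :: "('i,'k::comm_ring_1) fa set \<Rightarrow> 'i gen list set \<Rightarrow> ('i,'k) fa \<Rightarrow> bool" where
  "GS Rs B f \<longleftrightarrow> (\<exists>g\<in>spn B. cg Rs f g)"

lemma GS_cg: "cg Rs f g \<Longrightarrow> GS Rs B g \<Longrightarrow> GS Rs B f"
  unfolding GS_def using cg_trans by blast
lemma GS_zero: "GS Rs B fa_zero"
  unfolding GS_def using cg_refl spn.zero by blast
lemma GS_base: "b \<in> B \<Longrightarrow> GS Rs B (fa_word b)"
  unfolding GS_def using cg_refl spn.base by blast
lemma GS_add: "GS Rs B f \<Longrightarrow> GS Rs B g \<Longrightarrow> GS Rs B (fa_add f g)"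
  unfolding GS_def using cg_add spn.add by blast
lemma GS_smul: "GS Rs B f \<Longrightarrow> GS Rs B (fa_smul c f)"
  unfolding GS_def using cg_smul spn.smul by blast
lemma GS_sub: "GS Rs B f \<Longrightarrow> GS Rs B g \<Longrightarrow> GS Rs B (fa_sub f g)"
  by (simp add: fa_sub_as_add GS_add GS_smul)
lemma GS_sum: "(\<And>x. x \<in> A \<Longrightarrow> GS Rs B (F x)) \<Longrightarrow> GS Rs B (fa_sum A F)"
proof (cases "finite A")
  case False
  then have "fa_sum A F = fa_zero" by (simp add: fa_sum_def fa_zero_def)
  then show ?thesis by (simp add: GS_zero)
next
  case True
  assume h: "\<And>x. x \<in> A \<Longrightarrow> GS Rs B (F x)"
  from True h show ?thesis
  proof (induction A rule: finite_induct)
    case empty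
    have "fa_sum {} F = fa_zero" by (simp add: fa_sum_def fa_zero_def)
    then show ?case by (simp add: GS_zero)
  next
    case (insert x A)
    have "fa_sum (insert x A) F = fa_add (F x) (fa_sum A F)"
      using insert.hyps by (auto simp: fa_sum_def fa_add_def)
    then show ?case using insert by (simp add: GS_add)
  qed
qed
lemma GS_mono: "GS Rs B f \<Longrightarrow> B \<subseteq> B' \<Longrightarrow> GS Rs B' f"
proof -
  assume "GS Rs B f" "B \<subseteq> B'"
  then obtain g where g: "g \<in> spn B" "cg Rs f g" unfolding GS_def by blast
  from g(1) have "g \<in> spn B'"
    by induction (use \<open>B \<subseteq> B'\<close> in \<open>auto intro: spn.intros\<close>)
  then show ?thesis using g(2) unfolding GS_def by blast
qed

lemma GS_wrap:
  assumes "GS Rs B f" and "\<And>b. b \<in> B \<Longrightarrow> GS Rs B' (fa_word (p @ b @ s))"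
  shows "GS Rs B' (wrap p s f)"
proof -
  obtain g where g: "g \<in> spn B" "cg Rs f g" using assms(1) unfolding GS_def by blast
  from g(1) have "GS Rs B' (wrap p s g)"
  proof induction
    case zero then show ?case by (simp add: wrap_zero GS_zero)
  next
    case (base b) then show ?case by (simp add: wrap_word assms(2))
  next
    case (add f g) then show ?case by (simp add: wrap_add GS_add)
  next
    case (smul f c) then show ?case by (simp add: wrap_smul GS_smul)
  qed
  then show ?thesis using cg_wrap[OF g(2)] GS_cg by blast
qed

lemma GS_word_ctx: "GS Rs B (fa_word w) \<Longrightarrow> (\<And>b. b \<in> B \<Longrightarrow> GS Rs B' (fa_word (p @ b @ s))) \<Longrightarrow>
   GS Rs B' (fa_word (p @ w @ s))"
  using GS_wrap[of Rs B "fa_word w" B' p s] by (simp add: wrap_word)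

definition sc :: "('i,'k::field) fa set \<Rightarrow> 'i gen list \<Rightarrow> 'i gen list \<Rightarrow> bool" where
  "sc Rs w w' \<longleftrightarrow> (\<exists>c. c \<noteq> 0 \<and> cg Rs (fa_word w) (fa_smul c (fa_word w')))"

definition kill :: "('i,'k::comm_ring_1) fa set \<Rightarrow> 'i gen list \<Rightarrow> bool" where
  "kill Rs w \<longleftrightarrow> cg Rs (fa_word w) fa_zero"

lemma smul_smul: "fa_smul c (fa_smul d f) = fa_smul (c * d) (f :: ('i,'k::comm_ring_1) fa)"
  by (auto simp: fa_smul_def)
lemma smul_one: "fa_smul 1 f = (f :: ('i,'k::comm_ring_1) fa)"
  by (auto simp: fa_smul_def)
lemma smul_zero: "fa_smul c fa_zero = (fa_zero :: ('i,'k::comm_ring_1) fa)"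
  by (auto simp: fa_smul_def fa_zero_def)

lemma sc_refl: "sc Rs w w"
  unfolding sc_def by (rule exI[of _ 1]) (simp add: smul_one cg_refl)

lemma sc_sym: "sc Rs w w' \<Longrightarrow> sc Rs w' w"
proof -
  assume "sc Rs w w'"
  then obtain c where c: "c \<noteq> 0" "cg Rs (fa_word w) (fa_smul c (fa_word w'))" unfolding sc_def by blast
  have "cg Rs (fa_smul (inverse c) (fa_word w)) (fa_word w')"
    using cg_smul[OF c(2), of "inverse c"] c(1) by (simp add: smul_smul smul_one)
  then show ?thesis unfolding sc_def using c(1) cg_sym
    by (metis inverse_nonzero_iff_nonzero)
qed

lemma sc_trans: "sc Rs w1 w2 \<Longrightarrow> sc Rs w2 w3 \<Longrightarrow> sc Rs w1 w3"
proof -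
  assume "sc Rs w1 w2" "sc Rs w2 w3"
  then obtain c d where c: "c \<noteq> 0" "cg Rs (fa_word w1) (fa_smul c (fa_word w2))"
    and d: "d \<noteq> 0" "cg Rs (fa_word w2) (fa_smul d (fa_word w3))" unfolding sc_def by blast
  have 1: "cg Rs (fa_word w1) (fa_smul (c * d) (fa_word w3))"
    using cg_trans[OF c(2) cg_smul[OF d(2), of c]] by (simp add: smul_smul)
  have "c * d \<noteq> 0" using c(1) d(1) by simp
  then show ?thesis unfolding sc_def using 1 by blast
qed

lemma sc_ctx: "sc Rs w w' \<Longrightarrow> sc Rs (p @ w @ s) (p @ w' @ s)"
  unfolding sc_def using cg_wrap[of Rs "fa_word w" _ p s] by (metis wrap_word wrap_smul)

lemma kill_ctx: "kill Rs w \<Longrightarrow> kill Rs (p @ w @ s)"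
  unfolding kill_def using cg_wrap[of Rs "fa_word w" _ p s] by (metis wrap_word wrap_zero)

lemma GS_sc: "sc Rs w w' \<Longrightarrow> GS Rs B (fa_word w') \<Longrightarrow> GS Rs B (fa_word w)"
  unfolding sc_def using GS_cg GS_smul by blast

lemma GS_kill: "kill Rs w \<Longrightarrow> GS Rs B (fa_word w)"
  unfolding kill_def using GS_cg GS_zero by blast

lemma sc_kill: "sc Rs w w' \<Longrightarrow> kill Rs w' \<Longrightarrow> kill Rs w"
  unfolding sc_def kill_def by (metis cg_smul cg_trans smul_zero)

lemma sc_relI: "fa_sub (fa_word w) (fa_smul c (fa_word w')) \<in> Rs \<Longrightarrow> c \<noteq> 0 \<Longrightarrow> sc Rs w w'"
  unfolding sc_def using cg_rel by blast

lemma sc_relI1: "fa_sub (fa_word w) (fa_word w') \<in> Rs \<Longrightarrow> sc Rs w w'"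
  using sc_relI[of w 1 w'] by (simp add: smul_one)




lemma sg_nz: "sg b \<noteq> (0::'k::field)"
  by (simp add: sg_def)

lemma fa_sub_zero: "fa_sub f fa_zero = (f :: ('i,'k::comm_ring_1) fa)"
  by (auto simp: fun_eq_iff fa_sub_def fa_zero_def)

fun actg :: "'i gen list \<Rightarrow> 'i list \<Rightarrow> 'i list" where
  "actg [] \<nu> = \<nu>"
| "actg (T a # w) \<nu> = swp a (actg w \<nu>)"
| "actg (X p # w) \<nu> = actg w \<nu>"
| "actg (E \<mu> # w) \<nu> = actg w \<nu>"

definition swX :: "nat \<Rightarrow> nat \<Rightarrow> nat" where
  "swX a p = (if p = a then a + 1 else if p = a + 1 then a else p)"

locale KR =
  fixes podd :: "'i \<Rightarrow> bool" and t :: "'i \<Rightarrow> 'i \<Rightarrow> nat \<Rightarrow> nat \<Rightarrow> 'k::field"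
    and n :: nat and Ib :: "'i list set" and lam :: "'i \<Rightarrow> nat"
  assumes Ib_len: "\<nu> \<in> Ib \<Longrightarrow> length \<nu> = n"
    and Ib_dist: "\<nu> \<in> Ib \<Longrightarrow> distinct \<nu>"
    and Ib_swp: "\<nu> \<in> Ib \<Longrightarrow> 1 \<le> a \<Longrightarrow> a + 1 \<le> n \<Longrightarrow> swp a \<nu> \<in> Ib"
begin

abbreviation Rs :: "('i,'k) fa set" where "Rs \<equiv> cyc_rels podd t n Ib lam"

lemma at_neq: "\<nu> \<in> Ib \<Longrightarrow> 1 \<le> a \<Longrightarrow> 1 \<le> b \<Longrightarrow> a \<le> n \<Longrightarrow> b \<le> n \<Longrightarrow> a \<noteq> b \<Longrightarrow> at \<nu> a \<noteq> at \<nu> b"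
  unfolding at_def using Ib_dist Ib_len
  by (metis One_nat_def Suc_le_eq diff_Suc_1 diff_less le_less_trans less_Suc_eq_le nth_eq_iff_index_eq
      Suc_pred less_le_trans zero_less_one)

lemma kill_E: "\<mu> \<notin> Ib \<Longrightarrow> kill Rs [E \<mu>]"
  unfolding kill_def by (rule cg_rel0) (auto simp: cyc_rels_def)

lemma kill_X: "p \<notin> {1..n} \<Longrightarrow> kill Rs [X p]"
  unfolding kill_def by (rule cg_rel0) (auto simp: cyc_rels_def)

lemma kill_T: "\<not> (1 \<le> a \<and> a + 1 \<le> n) \<Longrightarrow> kill Rs [T a]"
  unfolding kill_def by (rule cg_rel0) (auto simp: cyc_rels_def)

lemma rel_EE: "\<mu> \<in> Ib \<Longrightarrow> \<nu> \<in> Ib \<Longrightarrow>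
  fa_sub (fa_word [E \<mu>, E \<nu>]) (if \<mu> = \<nu> then fa_word [E \<nu>] else fa_zero) \<in> Rs"
  by (unfold cyc_rels_def, rule UnI1, rule UnI1, rule UnI1, rule UnI1, rule UnI1, rule UnI1, rule UnI1, rule UnI1, rule UnI1, rule UnI1, rule UnI1, rule UnI1, rule UnI1, rule UnI1, blast)

lemma sc_EE: "\<nu> \<in> Ib \<Longrightarrow> sc Rs [E \<nu>, E \<nu>] [E \<nu>]"
  using rel_EE[of \<nu> \<nu>] by (auto intro: sc_relI1)

lemma kill_EE: "\<mu> \<in> Ib \<Longrightarrow> \<nu> \<in> Ib \<Longrightarrow> \<mu> \<noteq> \<nu> \<Longrightarrow> kill Rs [E \<mu>, E \<nu>]"
  unfolding kill_def using rel_EE[of \<mu> \<nu>] by (auto intro: cg_rel)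

lemma cg_sumE: "cg Rs (fa_sum Ib (\<lambda>\<nu>. fa_word [E \<nu>])) (fa_word [])"
  by (rule cg_rel) (auto simp: cyc_rels_def)

lemma sc_XE: "\<nu> \<in> Ib \<Longrightarrow> p \<in> {1..n} \<Longrightarrow> sc Rs [X p, E \<nu>] [E \<nu>, X p]"
  by (rule sc_relI1) (unfold cyc_rels_def, rule UnI1, rule UnI1, rule UnI1, rule UnI1, rule UnI1, rule UnI1, rule UnI1, rule UnI1, rule UnI1, rule UnI1, rule UnI1, rule UnI2, blast)

lemma sc_TE: "\<nu> \<in> Ib \<Longrightarrow> 1 \<le> a \<Longrightarrow> a + 1 \<le> n \<Longrightarrow> sc Rs [T a, E \<nu>] [E (swp a \<nu>), T a]"
  by (rule sc_relI1) (unfold cyc_rels_def, rule UnI1, rule UnI1, rule UnI1, rule UnI1, rule UnI1, rule UnI1, rule UnI1, rule UnI1, rule UnI1, rule UnI1, rule UnI2, blast)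

lemma sc_XX: "\<nu> \<in> Ib \<Longrightarrow> p \<in> {1..n} \<Longrightarrow> q \<in> {1..n} \<Longrightarrow> sc Rs [X p, X q, E \<nu>] [X q, X p, E \<nu>]"
proof (cases "p = q")
  case True then show ?thesis by (simp add: sc_refl)
next
  case False
  assume "\<nu> \<in> Ib" "p \<in> {1..n}" "q \<in> {1..n}"
  then show ?thesis using False
    by (intro sc_relI[OF _ sg_nz]) (unfold cyc_rels_def, rule UnI1, rule UnI1, rule UnI1, rule UnI1, rule UnI1, rule UnI1, rule UnI1, rule UnI1, rule UnI1, rule UnI1, rule UnI1, rule UnI1, rule UnI2, blast)
qed

lemma sc_TX0: "\<nu> \<in> Ib \<Longrightarrow> 1 \<le> a \<Longrightarrow> a + 1 \<le> n \<Longrightarrow> p \<in> {1..n} \<Longrightarrow> p \<noteq> a \<Longrightarrow> p \<noteq> a + 1 \<Longrightarrow>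
   sc Rs [T a, X p, E \<nu>] [X p, T a, E \<nu>]"
  by (intro sc_relI[OF _ sg_nz]) (unfold cyc_rels_def, rule UnI1, rule UnI1, rule UnI1, rule UnI1, rule UnI1, rule UnI1, rule UnI1, rule UnI1, rule UnI1, rule UnI2, blast)

lemma sc_TX1: "\<nu> \<in> Ib \<Longrightarrow> 1 \<le> a \<Longrightarrow> a + 1 \<le> n \<Longrightarrow>
   sc Rs [T a, X (a + 1), E \<nu>] [X a, T a, E \<nu>]"
proof -
  assume h: "\<nu> \<in> Ib" "1 \<le> a" "a + 1 \<le> n"
  then have ne: "at \<nu> a \<noteq> at \<nu> (a + 1)" by (intro at_neq) auto
  have "fa_sub (fa_sub (fa_word [T a, X (a + 1), E \<nu>])
        (fa_smul (sg (podd (at \<nu> a) \<and> podd (at \<nu> (a + 1)))) (fa_word [X a, T a, E \<nu>])))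
        (if at \<nu> a = at \<nu> (a + 1) then fa_word [E \<nu>] else fa_zero) \<in> Rs"
    by (insert h, unfold cyc_rels_def, rule UnI1, rule UnI1, rule UnI1, rule UnI1, rule UnI1, rule UnI1, rule UnI1, rule UnI1, rule UnI2, blast)
  then show ?thesis using ne by (intro sc_relI[OF _ sg_nz]) (simp add: fa_sub_zero)
qed

lemma sc_TX2: "\<nu> \<in> Ib \<Longrightarrow> 1 \<le> a \<Longrightarrow> a + 1 \<le> n \<Longrightarrow>
   sc Rs [T a, X a, E \<nu>] [X (a + 1), T a, E \<nu>]"
proof -
  assume h: "\<nu> \<in> Ib" "1 \<le> a" "a + 1 \<le> n"
  then have ne: "at \<nu> a \<noteq> at \<nu> (a + 1)" by (intro at_neq) auto
  have "fa_sub (fa_sub (fa_word [X (a + 1), T a, E \<nu>])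
        (fa_smul (sg (podd (at \<nu> a) \<and> podd (at \<nu> (a + 1)))) (fa_word [T a, X a, E \<nu>])))
        (if at \<nu> a = at \<nu> (a + 1) then fa_word [E \<nu>] else fa_zero) \<in> Rs"
    by (insert h, unfold cyc_rels_def, rule UnI1, rule UnI1, rule UnI1, rule UnI1, rule UnI1, rule UnI1, rule UnI1, rule UnI2, blast)
  then have "sc Rs [X (a + 1), T a, E \<nu>] [T a, X a, E \<nu>]"
    using ne by (intro sc_relI[OF _ sg_nz]) (simp add: fa_sub_zero)
  then show ?thesis by (rule sc_sym)
qed

lemma sc_TTfar: "\<nu> \<in> Ib \<Longrightarrow> 1 \<le> a \<Longrightarrow> a + 1 \<le> n \<Longrightarrow> 1 \<le> b \<Longrightarrow> b + 1 \<le> n \<Longrightarrow> (a + 1 < b \<or> b + 1 < a) \<Longrightarrow>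
   sc Rs [T a, T b, E \<nu>] [T b, T a, E \<nu>]"
  by (intro sc_relI[OF _ sg_nz]) (unfold cyc_rels_def, rule UnI1, rule UnI1, rule UnI1, rule UnI1, rule UnI1, rule UnI2, blast)

lemma sc_braid: "\<nu> \<in> Ib \<Longrightarrow> 1 \<le> a \<Longrightarrow> a + 2 \<le> n \<Longrightarrow>
   sc Rs [T (a + 1), T a, T (a + 1), E \<nu>] [T a, T (a + 1), T a, E \<nu>]"
proof -
  assume h: "\<nu> \<in> Ib" "1 \<le> a" "a + 2 \<le> n"
  then have ne: "at \<nu> a \<noteq> at \<nu> (a + 2)" by (intro at_neq) auto
  have "fa_sub (fa_sub (fa_word [T (a + 1), T a, T (a + 1), E \<nu>]) (fa_word [T a, T (a + 1), T a, E \<nu>]))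
        (if at \<nu> a = at \<nu> (a + 2) \<and> \<not> podd (at \<nu> a)
         then braid_even t (at \<nu> a) (at \<nu> (a + 1)) a \<nu>
         else if at \<nu> a = at \<nu> (a + 2) \<and> podd (at \<nu> a)
         then fa_smul (sg (podd (at \<nu> (a + 1)))) (braid_odd t (at \<nu> a) (at \<nu> (a + 1)) a \<nu>)
         else fa_zero) \<in> Rs"
    by (insert h, unfold cyc_rels_def, rule UnI1, rule UnI1, rule UnI1, rule UnI1, rule UnI2, blast)
  then show ?thesis using ne by (intro sc_relI1) (simp add: fa_sub_zero)
qed

lemma cg_TT: "\<nu> \<in> Ib \<Longrightarrow> 1 \<le> a \<Longrightarrow> a + 1 \<le> n \<Longrightarrow>
   cg Rs (fa_word [T a, T a, E \<nu>]) (Qe t (at \<nu> a) (at \<nu> (a + 1)) a (a + 1) \<nu>)"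
  by (rule cg_rel) (unfold cyc_rels_def, rule UnI1, rule UnI1, rule UnI1, rule UnI1, rule UnI1, rule UnI1, rule UnI2, blast)


definition goodg :: "'i gen \<Rightarrow> bool" where
  "goodg g \<longleftrightarrow> (\<exists>p. g = X p \<and> 1 \<le> p \<and> p \<le> n) \<or> (\<exists>a. g = T a \<and> 1 \<le> a \<and> a + 1 \<le> n)"

definition gw :: "'i gen list \<Rightarrow> bool" where
  "gw w \<longleftrightarrow> (\<forall>g\<in>set w. goodg g)"

lemma gw_simps[simp]: "gw [] " "gw (g # w) \<longleftrightarrow> goodg g \<and> gw w" "gw (v @ w) \<longleftrightarrow> gw v \<and> gw w"
  by (auto simp: gw_def)

lemma goodg_simps[simp]: "goodg (X p) \<longleftrightarrow> 1 \<le> p \<and> p \<le> n" "goodg (T a) \<longleftrightarrow> 1 \<le> a \<and> a + 1 \<le> n"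
  "\<not> goodg (E \<mu>)"
  by (auto simp: goodg_def)

lemma actg_Ib: "gw w \<Longrightarrow> \<nu> \<in> Ib \<Longrightarrow> actg w \<nu> \<in> Ib"
proof (induction w)
  case Nil then show ?case by simp
next
  case (Cons g w)
  then show ?case by (cases g) (auto intro: Ib_swp)
qed

lemma ins: "gw w \<Longrightarrow> \<nu> \<in> Ib \<Longrightarrow> sc Rs (w @ [E \<nu>]) (E (actg w \<nu>) # w @ [E \<nu>])"
proof (induction w)
  case Nil
  then show ?case using sc_sym[OF sc_EE] by simp
next
  case (Cons g w)
  let ?\<mu> = "actg w \<nu>"
  have mu: "?\<mu> \<in> Ib" using Cons actg_Ib by simp
  have 1: "sc Rs (g # w @ [E \<nu>]) (g # E ?\<mu> # w @ [E \<nu>])"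
    using sc_ctx[OF Cons.IH, of "[g]" "[]"] Cons.prems by simp
  have 2: "sc Rs ([g, E ?\<mu>]) ([E (actg (g # w) \<nu>), g])"
    using Cons.prems mu by (cases g) (auto intro: sc_XE sc_TE)
  have 3: "sc Rs (g # E ?\<mu> # w @ [E \<nu>]) (E (actg (g # w) \<nu>) # g # w @ [E \<nu>])"
    using sc_ctx[OF 2, of "[]" "w @ [E \<nu>]"] by simp
  show ?case using sc_trans[OF 1 3] by simp
qed

lemma absorb0: "gw w \<Longrightarrow> \<nu> \<in> Ib \<Longrightarrow> sc Rs (E (actg w \<nu>) # w @ [E \<nu>]) (w @ [E \<nu>])"
proof -
  assume h: "gw w" "\<nu> \<in> Ib"
  define \<mu> where "\<mu> = actg w \<nu>"
  have mu: "\<mu> \<in> Ib" using h actg_Ib \<mu>_def by simp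
  have 1: "sc Rs (E \<mu> # w @ [E \<nu>]) (E \<mu> # E \<mu> # w @ [E \<nu>])"
    using sc_ctx[OF ins[OF h(1,2)], of "[E \<mu>]" "[]"] h \<mu>_def by simp
  have 2: "sc Rs (E \<mu> # E \<mu> # w @ [E \<nu>]) (E \<mu> # w @ [E \<nu>])"
    using sc_ctx[OF sc_EE[OF mu], of "[]" "w @ [E \<nu>]"] by simp
  have 3: "sc Rs (E \<mu> # w @ [E \<nu>]) (w @ [E \<nu>])" using sc_sym[OF ins[OF h(1,2)]] \<mu>_def by simp
  show ?thesis using sc_trans[OF sc_trans[OF 1 2] 3] \<mu>_def by simp
qed

lemma absorb: "gw w \<Longrightarrow> \<nu> \<in> Ib \<Longrightarrow> \<mu> = actg w \<nu> \<Longrightarrow> sc Rs (E \<mu> # w @ [E \<nu>]) (w @ [E \<nu>])"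
  using absorb0 by simp

lemma absorb_kill: "gw w \<Longrightarrow> \<nu> \<in> Ib \<Longrightarrow> \<mu> \<noteq> actg w \<nu> \<Longrightarrow> kill Rs (E \<mu> # w @ [E \<nu>])"
proof -
  assume h: "gw w" "\<nu> \<in> Ib" "\<mu> \<noteq> actg w \<nu>"
  have mu: "actg w \<nu> \<in> Ib" using h actg_Ib by simp
  have 1: "sc Rs (E \<mu> # w @ [E \<nu>]) (E \<mu> # E (actg w \<nu>) # w @ [E \<nu>])"
    using sc_ctx[OF ins[OF h(1,2)], of "[E \<mu>]" "[]"] h by simp
  have 2: "kill Rs (E \<mu> # E (actg w \<nu>) # w @ [E \<nu>])"
  proof (cases "\<mu> \<in> Ib")
    case True
    then show ?thesis using kill_ctx[OF kill_EE[OF True mu h(3)], of "[]" "w @ [E \<nu>]"] by simp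
  next
    case False
    then show ?thesis using kill_ctx[OF kill_E[OF False], of "[]" "E (actg w \<nu>) # w @ [E \<nu>]"] by simp
  qed
  show ?thesis using sc_kill[OF 1 2] .
qed

lemma loc: "gw w \<Longrightarrow> \<nu> \<in> Ib \<Longrightarrow> sc Rs (l @ [E (actg w \<nu>)]) (l' @ [E (actg w \<nu>)]) \<Longrightarrow>
   sc Rs (l @ w @ [E \<nu>]) (l' @ w @ [E \<nu>])"
proof -
  assume h: "gw w" "\<nu> \<in> Ib" and r: "sc Rs (l @ [E (actg w \<nu>)]) (l' @ [E (actg w \<nu>)])"
  have 1: "sc Rs (l @ w @ [E \<nu>]) (l @ E (actg w \<nu>) # w @ [E \<nu>])"
    using sc_ctx[OF ins[OF h], of l "[]"] by simp
  have 2: "sc Rs (l @ E (actg w \<nu>) # w @ [E \<nu>]) (l' @ E (actg w \<nu>) # w @ [E \<nu>])"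
    using sc_ctx[OF r, of "[]" "w @ [E \<nu>]"] by simp
  have 3: "sc Rs (l' @ E (actg w \<nu>) # w @ [E \<nu>]) (l' @ w @ [E \<nu>])"
    using sc_ctx[OF sc_sym[OF ins[OF h]], of l' "[]"] by simp
  show ?thesis using sc_trans[OF sc_trans[OF 1 2] 3] .
qed

lemma mv_XX: "gw w \<Longrightarrow> \<nu> \<in> Ib \<Longrightarrow> p \<in> {1..n} \<Longrightarrow> q \<in> {1..n} \<Longrightarrow>
  sc Rs (X p # X q # w @ [E \<nu>]) (X q # X p # w @ [E \<nu>])"
  using loc[of w \<nu> "[X p, X q]" "[X q, X p]"] sc_XX actg_Ib by simp

lemma mv_TX: "gw w \<Longrightarrow> \<nu> \<in> Ib \<Longrightarrow> p \<in> {1..n} \<Longrightarrow> 1 \<le> a \<Longrightarrow> a + 1 \<le> n \<Longrightarrow>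
  sc Rs (T a # X p # w @ [E \<nu>]) (X (swX a p) # T a # w @ [E \<nu>])"
proof -
  assume h: "gw w" "\<nu> \<in> Ib" "p \<in> {1..n}" "1 \<le> a" "a + 1 \<le> n"
  have mu: "actg w \<nu> \<in> Ib" using h actg_Ib by simp
  have "sc Rs ([T a, X p] @ [E (actg w \<nu>)]) ([X (swX a p), T a] @ [E (actg w \<nu>)])"
    using sc_TX0[OF mu h(4,5,3)] sc_TX1[OF mu h(4,5)] sc_TX2[OF mu h(4,5)]
    by (auto simp: swX_def)
  then show ?thesis using loc[OF h(1,2), of "[T a, X p]" "[X (swX a p), T a]"] by simp
qed

lemma mv_TTfar: "gw w \<Longrightarrow> \<nu> \<in> Ib \<Longrightarrow> 1 \<le> a \<Longrightarrow> a + 1 \<le> n \<Longrightarrow> 1 \<le> b \<Longrightarrow> b + 1 \<le> n \<Longrightarrow>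
  (a + 1 < b \<or> b + 1 < a) \<Longrightarrow> sc Rs (T a # T b # w @ [E \<nu>]) (T b # T a # w @ [E \<nu>])"
  using loc[of w \<nu> "[T a, T b]" "[T b, T a]"] sc_TTfar actg_Ib by simp

lemma mv_braid: "gw w \<Longrightarrow> \<nu> \<in> Ib \<Longrightarrow> 1 \<le> a \<Longrightarrow> a + 2 \<le> n \<Longrightarrow>
  sc Rs (T (a + 1) # T a # T (a + 1) # w @ [E \<nu>]) (T a # T (a + 1) # T a # w @ [E \<nu>])"
  using loc[of w \<nu> "[T (a + 1), T a, T (a + 1)]" "[T a, T (a + 1), T a]"] sc_braid actg_Ib by simp


definition xo :: "'i gen list \<Rightarrow> bool" where
  "xo ys \<longleftrightarrow> (\<forall>g\<in>set ys. \<exists>q. g = X q \<and> 1 \<le> q \<and> q \<le> n)"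

lemma xo_simps[simp]: "xo []" "xo (g # ys) \<longleftrightarrow> (\<exists>q. g = X q \<and> 1 \<le> q \<and> q \<le> n) \<and> xo ys"
  "xo (ys @ zs) \<longleftrightarrow> xo ys \<and> xo zs"
  by (auto simp: xo_def)

lemma xo_gw: "xo ys \<Longrightarrow> gw ys"
  by (auto simp: xo_def gw_def)

lemma xo_actg: "xo ys \<Longrightarrow> actg (ys @ w) \<nu> = actg w \<nu>"
  by (induction ys) auto

lemma xo_rep: "1 \<le> q \<Longrightarrow> q \<le> n \<Longrightarrow> xo (replicate r (X q))"
  by (auto simp: xo_def)

lemma xo_xmono: "length ts \<le> n \<Longrightarrow> xo (xmono ts)"
  by (auto simp: xo_def xmono_def)

lemma xmono_zero: "xmono (replicate m 0) = []"
  by (auto simp: xmono_def nth_replicate)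

lemma X_past: "xo ys \<Longrightarrow> gw w \<Longrightarrow> \<nu> \<in> Ib \<Longrightarrow> p \<in> {1..n} \<Longrightarrow>
  sc Rs (X p # ys @ w @ [E \<nu>]) (ys @ X p # w @ [E \<nu>])"
proof (induction ys)
  case Nil then show ?case by (simp add: sc_refl)
next
  case (Cons g ys)
  then obtain q where q: "g = X q" "1 \<le> q" "q \<le> n" by auto
  have 1: "sc Rs (X p # X q # ys @ w @ [E \<nu>]) (X q # X p # ys @ w @ [E \<nu>])"
    using mv_XX[of "ys @ w" \<nu> p q] Cons xo_gw q by simp
  have 2: "sc Rs (X q # X p # ys @ w @ [E \<nu>]) (X q # ys @ X p # w @ [E \<nu>])"
    using sc_ctx[OF Cons.IH, of "[X q]" "[]"] Cons by simp
  show ?case using sc_trans[OF 1 2] q by simp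
qed

lemma upt_split3: "1 \<le> p \<Longrightarrow> p \<le> m \<Longrightarrow> [1..<m + 1] = [1..<p] @ p # [p + 1..<m + 1]"
proof -
  assume h: "1 \<le> p" "p \<le> m"
  have "[1..<m + 1] = [1..<p] @ [p..<m + 1]" using upt_add_eq_append[of 1 p "m + 1 - p"] h by simp
  also have "[p..<m + 1] = p # [p + 1..<m + 1]" using upt_conv_Cons[of p "m + 1"] h by simp
  finally show ?thesis .
qed

lemma xmono_split: "length ts = n \<Longrightarrow> 1 \<le> p \<Longrightarrow> p \<le> n \<Longrightarrow>
  xmono ts = concat (map (\<lambda>q. replicate (ts ! (q - 1)) (X q)) [1..<p]) @
     replicate (ts ! (p - 1)) (X p) @ concat (map (\<lambda>q. replicate (ts ! (q - 1)) (X q)) [p + 1..<n + 1])"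
proof -
  assume h: "length ts = n" "1 \<le> p" "p \<le> n"
  have e: "[1..<length ts + 1] = [1..<p] @ p # [p + 1..<n + 1]" using upt_split3[OF h(2,3)] h(1) by simp
  show ?thesis unfolding xmono_def e by simp
qed

lemma xmono_incr: "length ts = n \<Longrightarrow> 1 \<le> p \<Longrightarrow> p \<le> n \<Longrightarrow> gw w \<Longrightarrow> \<nu> \<in> Ib \<Longrightarrow>
  sc Rs (X p # xmono ts @ w @ [E \<nu>]) (xmono (ts[p - 1 := Suc (ts ! (p - 1))]) @ w @ [E \<nu>])"
proof -
  assume h: "length ts = n" "1 \<le> p" "p \<le> n" "gw w" "\<nu> \<in> Ib"
  let ?ts' = "ts[p - 1 := Suc (ts ! (p - 1))]"
  let ?A = "concat (map (\<lambda>q. replicate (ts ! (q - 1)) (X q)) [1..<p])"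
  let ?C = "concat (map (\<lambda>q. replicate (ts ! (q - 1)) (X q)) [p + 1..<n + 1])"
  have l: "length ?ts' = n" using h by simp
  have A: "concat (map (\<lambda>q. replicate (?ts' ! (q - 1)) (X q)) [1..<p]) = ?A"
    by (rule arg_cong[where f=concat], rule map_cong) (use h in auto)
  have C: "concat (map (\<lambda>q. replicate (?ts' ! (q - 1)) (X q)) [p + 1..<n + 1]) = ?C"
    by (rule arg_cong[where f=concat], rule map_cong) (use h in auto)
  have e1: "xmono ts = ?A @ replicate (ts ! (p - 1)) (X p) @ ?C" using xmono_split[OF h(1-3)] .
  have nth: "?ts' ! (p - 1) = Suc (ts ! (p - 1))" using h by simp
  have e2: "xmono ?ts' = ?A @ X p # replicate (ts ! (p - 1)) (X p) @ ?C"
    unfolding xmono_split[OF l h(2,3)] A C nth by simp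
  have xA: "xo ?A" using h by (auto simp: xo_def)
  have xB: "xo (replicate (ts ! (p - 1)) (X p) @ ?C)" using h by (auto simp: xo_def)
  have "sc Rs (X p # ?A @ (replicate (ts ! (p - 1)) (X p) @ ?C @ w) @ [E \<nu>])
             (?A @ X p # (replicate (ts ! (p - 1)) (X p) @ ?C @ w) @ [E \<nu>])"
    using X_past[OF xA _ h(5), of "replicate (ts ! (p - 1)) (X p) @ ?C @ w" p] xB xo_gw h by simp
  then show ?thesis unfolding e1 e2 by (simp only: append_assoc append_Cons)
qed

lemma Xnorm: "xo xs \<Longrightarrow> length ts = n \<Longrightarrow> gw w \<Longrightarrow> \<nu> \<in> Ib \<Longrightarrow>
  \<exists>ts'. length ts' = n \<and> sc Rs (xs @ xmono ts @ w @ [E \<nu>]) (xmono ts' @ w @ [E \<nu>])"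
proof (induction xs)
  case Nil then show ?case using sc_refl by fastforce
next
  case (Cons g xs)
  then obtain p where p: "g = X p" "1 \<le> p" "p \<le> n" by auto
  from Cons obtain ts' where ts': "length ts' = n" "sc Rs (xs @ xmono ts @ w @ [E \<nu>]) (xmono ts' @ w @ [E \<nu>])"
    by auto
  have 1: "sc Rs (X p # xs @ xmono ts @ w @ [E \<nu>]) (X p # xmono ts' @ w @ [E \<nu>])"
    using sc_ctx[OF ts'(2), of "[X p]" "[]"] by simp
  have 2: "sc Rs (X p # xmono ts' @ w @ [E \<nu>]) (xmono (ts'[p - 1 := Suc (ts' ! (p - 1))]) @ w @ [E \<nu>])"
    using xmono_incr[OF ts'(1) p(2,3) Cons.prems(3,4)] .
  show ?case using sc_trans[OF 1 2] p ts'(1) by (intro exI[of _ "ts'[p - 1 := Suc (ts' ! (p - 1))]"]) simp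
qed

lemma T_past_X: "xo ys \<Longrightarrow> gw w \<Longrightarrow> \<nu> \<in> Ib \<Longrightarrow> 1 \<le> a \<Longrightarrow> a + 1 \<le> n \<Longrightarrow>
  \<exists>ys'. xo ys' \<and> sc Rs (T a # ys @ w @ [E \<nu>]) (ys' @ T a # w @ [E \<nu>])"
proof (induction ys)
  case Nil then show ?case using sc_refl by fastforce
next
  case (Cons g ys)
  then obtain q where q: "g = X q" "1 \<le> q" "q \<le> n" by auto
  from Cons obtain ys' where ys': "xo ys'" "sc Rs (T a # ys @ w @ [E \<nu>]) (ys' @ T a # w @ [E \<nu>])"
    by auto
  have 1: "sc Rs (T a # X q # ys @ w @ [E \<nu>]) (X (swX a q) # T a # ys @ w @ [E \<nu>])"
    using mv_TX[of "ys @ w" \<nu> q a] Cons q xo_gw by simp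
  have 2: "sc Rs (X (swX a q) # T a # ys @ w @ [E \<nu>]) (X (swX a q) # ys' @ T a # w @ [E \<nu>])"
    using sc_ctx[OF ys'(2), of "[X (swX a q)]" "[]"] by simp
  have r: "1 \<le> swX a q \<and> swX a q \<le> n" using q Cons.prems by (auto simp: swX_def)
  show ?case using sc_trans[OF 1 2] q ys'(1) r by (intro exI[of _ "X (swX a q) # ys'"]) simp
qed

lemma Tw_past_X: "xo ys \<Longrightarrow> gw w \<Longrightarrow> \<nu> \<in> Ib \<Longrightarrow> (\<forall>a\<in>set c. 1 \<le> a \<and> a + 1 \<le> n) \<Longrightarrow>
  \<exists>ys'. xo ys' \<and> sc Rs (map T c @ ys @ w @ [E \<nu>]) (ys' @ map T c @ w @ [E \<nu>])"
proof (induction c arbitrary: w)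
  case Nil then show ?case using sc_refl by fastforce
next
  case (Cons a c)
  have gw: "gw (map T c @ w)" using Cons.prems by (auto simp: gw_def)
  from Cons obtain ys' where ys': "xo ys'" "sc Rs (map T c @ ys @ w @ [E \<nu>]) (ys' @ map T c @ w @ [E \<nu>])"
    by auto
  obtain ys'' where ys'': "xo ys''" "sc Rs (T a # ys' @ map T c @ w @ [E \<nu>]) (ys'' @ T a # map T c @ w @ [E \<nu>])"
    using T_past_X[OF ys'(1) gw Cons.prems(3)] Cons.prems(4) by auto
  have 1: "sc Rs (T a # map T c @ ys @ w @ [E \<nu>]) (T a # ys' @ map T c @ w @ [E \<nu>])"
    using sc_ctx[OF ys'(2), of "[T a]" "[]"] by simp
  show ?case using sc_trans[OF 1 ys''(2)] ys''(1) by (intro exI[of _ ys'']) simp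
qed

end



fun NF :: "nat \<Rightarrow> nat list set" where
  "NF 0 = {[]}"
| "NF (Suc m) = {[k..<Suc m] @ u | k u. 1 \<le> k \<and> k \<le> Suc m \<and> u \<in> NF m}"

lemma NF_range: "u \<in> NF m \<Longrightarrow> a \<in> set u \<Longrightarrow> 1 \<le> a \<and> a < m"
proof (induction m arbitrary: u)
  case 0 then show ?case by simp
next
  case (Suc m)
  then obtain k u' where "u = [k..<Suc m] @ u'" "1 \<le> k" "u' \<in> NF m" by auto
  with Suc show ?case by fastforce
qed

lemma NF_cons: "1 \<le> k \<Longrightarrow> k \<le> Suc m \<Longrightarrow> u \<in> NF m \<Longrightarrow> [k..<Suc m] @ u \<in> NF (Suc m)"
  by auto

lemma NF_Suc: "u \<in> NF m \<Longrightarrow> u \<in> NF (Suc m)"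
  using NF_cons[of "Suc m" m u] by simp

lemma NF_nil: "[] \<in> NF m"
proof (induction m)
  case 0 then show ?case by simp
next
  case (Suc m) then show ?case using NF_Suc by blast
qed

lemma swp_len[simp]: "length (swp a \<sigma>) = length \<sigma>"
  by (simp add: swp_def)

lemma swp_nth_other: "j \<noteq> a - 1 \<Longrightarrow> j \<noteq> a \<Longrightarrow> swp a \<sigma> ! j = \<sigma> ! j"
  by (simp add: swp_def)

lemma swp_nth1: "1 \<le> a \<Longrightarrow> a < length \<sigma> \<Longrightarrow> swp a \<sigma> ! (a - 1) = \<sigma> ! a"
  by (simp add: swp_def nth_list_update)

lemma actg_append: "actg (v @ w) \<nu> = actg v (actg w \<nu>)"
proof (induction v)
  case Nil then show ?case by simp
next
  case (Cons g v) then show ?case by (cases g) auto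
qed

lemma actgT_len: "length (actg (map T u) \<sigma>) = length \<sigma>"
  by (induction u) auto

lemma actgT_high: "(\<forall>a\<in>set u. a < m) \<Longrightarrow> m \<le> j \<Longrightarrow> actg (map T u) \<sigma> ! j = \<sigma> ! j"
proof (induction u)
  case Nil then show ?case by simp
next
  case (Cons a u)
  then have "j \<noteq> a - 1" "j \<noteq> a" by auto
  then show ?case using Cons by (simp add: swp_nth_other)
qed

lemma actg_upt: "1 \<le> k \<Longrightarrow> k \<le> Suc m \<Longrightarrow> Suc m \<le> length \<sigma> \<Longrightarrow>
  actg (map T [k..<Suc m]) \<sigma> ! (k - 1) = \<sigma> ! m"
proof (induction "Suc m - k" arbitrary: k)
  case 0
  then have "k = Suc m" by simp
  then show ?case by simp
next
  case (Suc d)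
  then have km: "k < Suc m" by simp
  have e: "[k..<Suc m] = k # [Suc k..<Suc m]" using km upt_conv_Cons by blast
  have ih: "actg (map T [Suc k..<Suc m]) \<sigma> ! (Suc k - 1) = \<sigma> ! m"
    using Suc.hyps(1)[of "Suc k"] Suc.hyps(2) Suc.prems km by simp
  have "actg (map T [k..<Suc m]) \<sigma> ! (k - 1) = actg (map T [Suc k..<Suc m]) \<sigma> ! k"
    unfolding e using swp_nth1[of k "actg (map T [Suc k..<Suc m]) \<sigma>"] Suc.prems km
    by (simp add: actgT_len del: upt_Suc)
  then show ?case using ih by simp
qed

lemma NF_fix: "u \<in> NF m \<Longrightarrow> m \<le> length \<nu> \<Longrightarrow> distinct \<nu> \<Longrightarrow> actg (map T u) \<nu> = \<nu> \<Longrightarrow> u = []"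
proof (induction m arbitrary: u)
  case 0 then show ?case by simp
next
  case (Suc m)
  from Suc.prems(1) obtain k u' where u: "u = [k..<Suc m] @ u'" "1 \<le> k" "k \<le> Suc m" "u' \<in> NF m" by auto
  let ?\<sigma> = "actg (map T u') \<nu>"
  have hi: "?\<sigma> ! m = \<nu> ! m"
    by (rule actgT_high[of u' m]) (use NF_range[OF u(4)] in auto)
  have eq: "actg (map T u) \<nu> = actg (map T [k..<Suc m]) ?\<sigma>"
    unfolding u(1) by (simp add: actg_append del: upt_Suc)
  have pos: "actg (map T [k..<Suc m]) ?\<sigma> ! (k - 1) = ?\<sigma> ! m"
    by (rule actg_upt[OF u(2,3)]) (use Suc.prems in \<open>simp add: actgT_len\<close>)
  have kk: "k = Suc m"
  proof (rule ccontr)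
    assume "k \<noteq> Suc m"
    then have "k - 1 < m" using u by simp
    moreover have "\<nu> ! (k - 1) = \<nu> ! m" using pos hi eq Suc.prems(4) by simp
    ultimately show False using Suc.prems(2,3) nth_eq_iff_index_eq by fastforce
  qed
  then have uu: "u = u'" using u by simp
  have "actg (map T u') \<nu> = \<nu>" using Suc.prems(4) uu by simp
  then have "u' = []" using Suc.IH[OF u(4)] Suc.prems by simp
  then show ?case using uu by simp
qed

context KR begin

definition Bm :: "nat \<Rightarrow> 'i list \<Rightarrow> 'i gen list set" where
  "Bm m \<nu> = {xmono ts @ map T u @ [E \<nu>] | ts u. length ts = n \<and> u \<in> NF m}"

lemma gw_mapT: "(\<forall>a\<in>set c. 1 \<le> a \<and> a + 1 \<le> n) \<Longrightarrow> gw (map T c)"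
  by (auto simp: gw_def)

lemma NF_gw: "u \<in> NF m \<Longrightarrow> m \<le> n \<Longrightarrow> gw (map T u)"
  using NF_range by (fastforce simp: gw_def)

lemma Bm_base: "length ts = n \<Longrightarrow> u \<in> NF m \<Longrightarrow> GS Rs (Bm m \<nu>) (fa_word (xmono ts @ map T u @ [E \<nu>]))"
  by (rule GS_base) (auto simp: Bm_def)

lemma LX: "xo xs \<Longrightarrow> length ts = n \<Longrightarrow> u \<in> NF m \<Longrightarrow> m \<le> n \<Longrightarrow> \<nu> \<in> Ib \<Longrightarrow>
  GS Rs (Bm m \<nu>) (fa_word (xs @ xmono ts @ map T u @ [E \<nu>]))"
proof -
  assume h: "xo xs" "length ts = n" "u \<in> NF m" "m \<le> n" "\<nu> \<in> Ib"
  obtain ts' where ts': "length ts' = n" "sc Rs (xs @ xmono ts @ map T u @ [E \<nu>]) (xmono ts' @ map T u @ [E \<nu>])"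
    using Xnorm[OF h(1,2) NF_gw[OF h(3,4)] h(5)] by blast
  show ?thesis using GS_sc[OF ts'(2) Bm_base[OF ts'(1) h(3)]] .
qed

lemma LT: "c @ v \<in> NF m \<Longrightarrow> m \<le> n \<Longrightarrow> length ts = n \<Longrightarrow> \<nu> \<in> Ib \<Longrightarrow>
  GS Rs (Bm m \<nu>) (fa_word (map T c @ xmono ts @ map T v @ [E \<nu>]))"
proof -
  assume h: "c @ v \<in> NF m" "m \<le> n" "length ts = n" "\<nu> \<in> Ib"
  have rc: "\<forall>a\<in>set c. 1 \<le> a \<and> a + 1 \<le> n" using NF_range[OF h(1)] h(2) by fastforce
  have gv: "gw (map T v)" using NF_range[OF h(1)] h(2) by (fastforce simp: gw_def)
  obtain ys' where ys': "xo ys'" "sc Rs (map T c @ xmono ts @ map T v @ [E \<nu>]) (ys' @ map T c @ map T v @ [E \<nu>])"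
    using Tw_past_X[OF xo_xmono gv h(4) rc] h(3) by auto
  have "GS Rs (Bm m \<nu>) (fa_word (ys' @ xmono (replicate n 0) @ map T (c @ v) @ [E \<nu>]))"
    by (rule LX[OF ys'(1) _ h(1,2,4)]) simp
  then show ?thesis using GS_sc[OF ys'(2)] by (simp add: xmono_zero)
qed

lemma far: "(\<forall>b\<in>set c. (a + 1 < b \<or> b + 1 < a) \<and> 1 \<le> b \<and> b + 1 \<le> n) \<Longrightarrow> 1 \<le> a \<Longrightarrow> a + 1 \<le> n \<Longrightarrow>
  gw w \<Longrightarrow> \<nu> \<in> Ib \<Longrightarrow> sc Rs (T a # map T c @ w @ [E \<nu>]) (map T c @ T a # w @ [E \<nu>])"
proof (induction c)
  case Nil then show ?case by (simp add: sc_refl)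
next
  case (Cons b c)
  have g: "gw (map T c @ w)" using Cons.prems by (auto simp: gw_def)
  have 1: "sc Rs (T a # T b # map T c @ w @ [E \<nu>]) (T b # T a # map T c @ w @ [E \<nu>])"
    using mv_TTfar[OF g Cons.prems(5) Cons.prems(2,3), of b] Cons.prems(1) by auto
  have 2: "sc Rs (T b # T a # map T c @ w @ [E \<nu>]) (T b # map T c @ T a # w @ [E \<nu>])"
    using sc_ctx[OF Cons.IH, of "[T b]" "[]"] Cons.prems by simp
  show ?case using sc_trans[OF 1 2] by simp
qed

lemma upt_dec: "1 \<le> k \<Longrightarrow> k < a \<Longrightarrow> a \<le> m \<Longrightarrow> [k..<Suc m] = [k..<a - 1] @ (a - 1) # a # [a + 1..<Suc m]"
proof -
  assume h: "1 \<le> k" "k < a" "a \<le> m"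
  have "[k..<Suc m] = [k..<a - 1] @ [a - 1..<Suc m]" using upt_add_eq_append[of k "a - 1" "Suc m - (a - 1)"] h by simp
  also have "[a - 1..<Suc m] = (a - 1) # [a..<Suc m]" using upt_conv_Cons[of "a - 1" "Suc m"] h by simp
  also have "[a..<Suc m] = a # [a + 1..<Suc m]" using upt_conv_Cons[of a "Suc m"] h by simp
  finally show ?thesis .
qed

lemma core: "m \<le> n \<Longrightarrow> u \<in> NF m \<Longrightarrow> 1 \<le> a \<Longrightarrow> a < m \<Longrightarrow> \<nu> \<in> Ib \<Longrightarrow>
  GS Rs (Bm m \<nu>) (fa_word (T a # map T u @ [E \<nu>]))"
proof (induction m arbitrary: u a)
  case 0 then show ?case by simp
next
  case (Suc m)
  from Suc.prems(2) obtain k u' where u: "u = [k..<Suc m] @ u'" "1 \<le> k" "k \<le> Suc m" "u' \<in> NF m" by auto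
  have mn: "m \<le> n" using Suc.prems by simp
  have gu': "gw (map T u')" using NF_gw[OF u(4) mn] .
  have rk: "\<forall>b\<in>set [k..<Suc m]. 1 \<le> b \<and> b + 1 \<le> n" using u Suc.prems by auto
  have tail: "GS Rs (Bm (Suc m) \<nu>) (fa_word (map T [k..<Suc m] @ T a' # map T u' @ [E \<nu>]))"
    if a': "1 \<le> a'" "a' < m" for a'
  proof -
    have ih: "GS Rs (Bm m \<nu>) (fa_word (T a' # map T u' @ [E \<nu>]))"
      using Suc.IH[OF mn u(4) a' Suc.prems(5)] .
    have "GS Rs (Bm (Suc m) \<nu>) (fa_word (map T [k..<Suc m] @ (T a' # map T u' @ [E \<nu>]) @ []))"
    proof (rule GS_word_ctx[OF ih])
      fix b assume "b \<in> Bm m \<nu>"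
      then obtain ts v where b: "b = xmono ts @ map T v @ [E \<nu>]" "length ts = n" "v \<in> NF m"
        by (auto simp: Bm_def)
      show "GS Rs (Bm (Suc m) \<nu>) (fa_word (map T [k..<Suc m] @ b @ []))"
        using LT[OF NF_cons[OF u(2,3) b(3)] Suc.prems(1) b(2) Suc.prems(5)] b(1) by simp
    qed
    then show ?thesis by simp
  qed
  consider (c1) "a + 1 < k" | (c2) "a + 1 = k" | (c3) "a = k" | (c4) "k < a" by linarith
  then show ?case
  proof cases
    case c1
    have "sc Rs (T a # map T [k..<Suc m] @ map T u' @ [E \<nu>]) (map T [k..<Suc m] @ T a # map T u' @ [E \<nu>])"
      by (rule far[OF _ Suc.prems(3) _ gu' Suc.prems(5)]) (use c1 rk Suc.prems in auto)
    then have sc1: "sc Rs (T a # map T u @ [E \<nu>]) (map T [k..<Suc m] @ T a # map T u' @ [E \<nu>])"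
      using u(1) by simp
    have am: "a < m" using c1 u(3) by simp
    show ?thesis using GS_sc[OF sc1 tail[OF Suc.prems(3) am]] .
  next
    case c2
    have e: "T a # map T u @ [E \<nu>] = xmono (replicate n 0) @ map T ([a..<Suc m] @ u') @ [E \<nu>]"
      using u c2 Suc.prems by (simp add: xmono_zero upt_conv_Cons)
    show ?thesis unfolding e by (rule Bm_base) (use NF_cons[OF Suc.prems(3) _ u(4)] Suc.prems in auto)
  next
    case c3
    have km: "k < Suc m" using c3 Suc.prems by simp
    let ?rest = "map T [Suc k..<Suc m] @ map T u'"
    let ?\<mu> = "actg ?rest \<nu>"
    have grest: "gw ?rest" using rk gu' by (auto simp: gw_def)
    have mu: "?\<mu> \<in> Ib" using actg_Ib[OF grest Suc.prems(5)] .
    have k1: "1 \<le> k" "k + 1 \<le> n" using u Suc.prems km by auto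
    have e: "T a # map T u @ [E \<nu>] = T k # T k # ?rest @ [E \<nu>]"
      using u c3 km by (simp add: upt_conv_Cons)
    have s1: "sc Rs (T k # T k # ?rest @ [E \<nu>]) ([T k, T k, E ?\<mu>] @ ?rest @ [E \<nu>])"
      using sc_ctx[OF ins[OF grest Suc.prems(5)], of "[T k, T k]" "[]"] by simp
    have c: "cg Rs (fa_word ([T k, T k, E ?\<mu>] @ ?rest @ [E \<nu>]))
        (wrap [] (?rest @ [E \<nu>]) (Qe t (at ?\<mu> k) (at ?\<mu> (k + 1)) k (k + 1) ?\<mu>))"
      using cg_wrap[OF cg_TT[OF mu k1], of "[]" "?rest @ [E \<nu>]"] by (simp add: wrap_word)
    have nfr: "[Suc k..<Suc m] @ u' \<in> NF (Suc m)" using NF_cons[of "Suc k" m u'] km u(4) by simp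
    have g: "GS Rs (Bm (Suc m) \<nu>) (fa_word (replicate r (X k) @ replicate s (X (k + 1)) @ [E ?\<mu>] @ ?rest @ [E \<nu>]))"
      for r s
    proof -
      have xo: "xo (replicate r (X k) @ replicate s (X (k + 1)))" using k1 by (auto simp: xo_def)
      have s: "sc Rs ((replicate r (X k) @ replicate s (X (k + 1))) @ (E ?\<mu> # ?rest @ [E \<nu>]) @ [])
                    ((replicate r (X k) @ replicate s (X (k + 1))) @ (?rest @ [E \<nu>]) @ [])"
        by (rule sc_ctx[OF absorb[OF grest Suc.prems(5) refl]])
      have "GS Rs (Bm (Suc m) \<nu>) (fa_word ((replicate r (X k) @ replicate s (X (k + 1))) @ xmono (replicate n 0) @ map T ([Suc k..<Suc m] @ u') @ [E \<nu>]))"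
        by (rule LX[OF xo _ nfr Suc.prems(1,5)]) simp
      then show ?thesis using GS_sc[OF s] by (simp add: xmono_zero)
    qed
    have "GS Rs (Bm (Suc m) \<nu>) (wrap [] (?rest @ [E \<nu>]) (Qe t (at ?\<mu> k) (at ?\<mu> (k + 1)) k (k + 1) ?\<mu>))"
      unfolding Qe_def wrap_sum
      apply (rule GS_sum)
      subgoal for x
        apply (cases x)
        apply (simp del: upt_Suc add: wrap_smul wrap_word)
        apply (rule GS_smul)
        using g by (simp del: upt_Suc)
      done
    then show ?thesis unfolding e using GS_sc[OF s1] GS_cg[OF c] by blast
  next
    case c4
    have am: "a \<le> m" using Suc.prems by simp
    let ?L = "[k..<a - 1]" and ?Rr = "[a + 1..<Suc m]" and ?W = "map T u'"
    have eu: "[k..<Suc m] = ?L @ (a - 1) # a # ?Rr" using upt_dec[OF u(2) c4 am] .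
    have gRr: "gw (map T ?Rr @ ?W)" using gu' Suc.prems(1) by (auto simp: gw_def)
    have gRr2: "gw (T (a - 1) # T a # map T ?Rr @ ?W)" using rk gu' eu c4 u(2) Suc.prems by (auto simp: gw_def)
    have s1raw: "sc Rs (T a # map T ?L @ (T (a - 1) # T a # map T ?Rr @ ?W) @ [E \<nu>])
                    (map T ?L @ T a # (T (a - 1) # T a # map T ?Rr @ ?W) @ [E \<nu>])"
      by (rule far[OF _ Suc.prems(3) _ gRr2 Suc.prems(5)]) (use c4 am u(2) Suc.prems(1,3) in auto)
    have s1: "sc Rs (T a # map T ?L @ T (a - 1) # T a # map T ?Rr @ ?W @ [E \<nu>])
                    (map T ?L @ T a # T (a - 1) # T a # map T ?Rr @ ?W @ [E \<nu>])"
      using s1raw by (simp del: upt_Suc)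
    have br: "sc Rs (T (a - 1 + 1) # T (a - 1) # T (a - 1 + 1) # (map T ?Rr @ ?W) @ [E \<nu>])
                    (T (a - 1) # T (a - 1 + 1) # T (a - 1) # (map T ?Rr @ ?W) @ [E \<nu>])"
      by (rule mv_braid[OF gRr Suc.prems(5)]) (use c4 u(2) Suc.prems in auto)
    have a1: "a - 1 + 1 = a" using c4 u(2) by simp
    have s2: "sc Rs (map T ?L @ T a # T (a - 1) # T a # map T ?Rr @ ?W @ [E \<nu>])
                    (map T ?L @ T (a - 1) # T a # T (a - 1) # map T ?Rr @ ?W @ [E \<nu>])"
      using sc_ctx[OF br, of "map T ?L" "[]"] a1 by simp
    have s3: "sc Rs (T (a - 1) # map T ?Rr @ ?W @ [E \<nu>]) (map T ?Rr @ T (a - 1) # ?W @ [E \<nu>])"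
      by (rule far[OF _ _ _ gu' Suc.prems(5)]) (use c4 u(2) am Suc.prems(1,3) in auto)
    have s3': "sc Rs (map T ?L @ T (a - 1) # T a # T (a - 1) # map T ?Rr @ ?W @ [E \<nu>])
                    (map T ?L @ T (a - 1) # T a # map T ?Rr @ T (a - 1) # ?W @ [E \<nu>])"
      using sc_ctx[OF s3, of "map T ?L @ [T (a - 1), T a]" "[]"] by simp
    have tl: "GS Rs (Bm (Suc m) \<nu>) (fa_word (map T ?L @ T (a - 1) # T a # map T ?Rr @ T (a - 1) # ?W @ [E \<nu>]))"
    proof -
      have a1': "1 \<le> a - 1" "a - 1 < m" using c4 u(2) am by auto
      show ?thesis using tail[OF a1'] unfolding eu by (simp del: upt_Suc)
    qed
    have "sc Rs (T a # map T u @ [E \<nu>]) (map T ?L @ T (a - 1) # T a # map T ?Rr @ T (a - 1) # ?W @ [E \<nu>])"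
      using sc_trans[OF sc_trans[OF s1 s2] s3'] unfolding u(1) eu by (simp del: upt_Suc)
    then show ?thesis using GS_sc tl by blast
  qed
qed


lemma mainA: "\<nu> \<in> Ib \<Longrightarrow> GS Rs (Bm n \<nu>) (fa_word (w @ [E \<nu>]))"
proof (induction w)
  case Nil
  have "GS Rs (Bm n \<nu>) (fa_word (xmono (replicate n 0) @ map T [] @ [E \<nu>]))"
    by (rule Bm_base) (auto simp: NF_nil)
  then show ?case by (simp add: xmono_zero)
next
  case (Cons g w)
  have "GS Rs (Bm n \<nu>) (fa_word ([g] @ (w @ [E \<nu>]) @ []))"
  proof (rule GS_word_ctx[OF Cons.IH[OF Cons.prems]])
    fix b assume "b \<in> Bm n \<nu>"
    then obtain ts u where b: "b = xmono ts @ map T u @ [E \<nu>]" "length ts = n" "u \<in> NF n"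
      by (auto simp: Bm_def)
    have gu: "gw (map T u)" using NF_gw[OF b(3)] by simp
    have gb: "gw (xmono ts @ map T u)" using xo_gw[OF xo_xmono] b(2) gu by simp
    have "GS Rs (Bm n \<nu>) (fa_word (g # b))"
    proof (cases g)
      case (E \<mu>)
      show ?thesis
      proof (cases "\<mu> = actg (xmono ts @ map T u) \<nu>")
        case True
        have "sc Rs (E \<mu> # (xmono ts @ map T u) @ [E \<nu>]) ((xmono ts @ map T u) @ [E \<nu>])"
          by (rule absorb[OF gb Cons.prems True])
        then show ?thesis using E b GS_sc Bm_base by fastforce
      next
        case False
        have "kill Rs (E \<mu> # (xmono ts @ map T u) @ [E \<nu>])"
          by (rule absorb_kill[OF gb Cons.prems False])
        then show ?thesis using E b GS_kill by fastforce
      qed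
    next
      case (X p)
      show ?thesis
      proof (cases "p \<in> {1..n}")
        case True
        have "GS Rs (Bm n \<nu>) (fa_word ([X p] @ xmono ts @ map T u @ [E \<nu>]))"
          by (rule LX[OF _ b(2,3) le_refl Cons.prems]) (use True in auto)
        then show ?thesis using X b by simp
      next
        case False
        then show ?thesis using X kill_ctx[OF kill_X[OF False], of "[]" b] GS_kill by fastforce
      qed
    next
      case (T a)
      show ?thesis
      proof (cases "1 \<le> a \<and> a + 1 \<le> n")
        case True
        obtain ys' where ys': "xo ys'" "sc Rs (T a # xmono ts @ map T u @ [E \<nu>]) (ys' @ T a # map T u @ [E \<nu>])"
          using T_past_X[OF xo_xmono gu Cons.prems, of ts a] b(2) True by auto
        have c: "GS Rs (Bm n \<nu>) (fa_word (T a # map T u @ [E \<nu>]))"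
          by (rule core[OF le_refl b(3) _ _ Cons.prems]) (use True in auto)
        have "GS Rs (Bm n \<nu>) (fa_word (ys' @ (T a # map T u @ [E \<nu>]) @ []))"
        proof (rule GS_word_ctx[OF c])
          fix b' assume "b' \<in> Bm n \<nu>"
          then obtain ts' u' where b': "b' = xmono ts' @ map T u' @ [E \<nu>]" "length ts' = n" "u' \<in> NF n"
            by (auto simp: Bm_def)
          show "GS Rs (Bm n \<nu>) (fa_word (ys' @ b' @ []))"
            using LX[OF ys'(1) b'(2,3) le_refl Cons.prems] b'(1) by simp
        qed
        then show ?thesis using GS_sc[OF ys'(2)] T b by simp
      next
        case False
        then show ?thesis using T kill_ctx[OF kill_T[OF False], of "[]" b] GS_kill by fastforce
      qed
    qed
    then show "GS Rs (Bm n \<nu>) (fa_word ([g] @ b @ []))" by simp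
  qed
  then show ?case by simp
qed

definition Fin :: "'i gen list set" where
  "Fin = {xmono ts @ [E \<mu>] | ts \<mu>. length ts = n \<and> \<mu> \<in> Ib}"

lemma finA: "\<nu> \<in> Ib \<Longrightarrow> GS Rs Fin (fa_word (E \<nu> # w @ [E \<nu>]))"
proof -
  assume nu: "\<nu> \<in> Ib"
  have "GS Rs Fin (fa_word ([E \<nu>] @ (w @ [E \<nu>]) @ []))"
  proof (rule GS_word_ctx[OF mainA[OF nu]])
    fix b assume "b \<in> Bm n \<nu>"
    then obtain ts u where b: "b = xmono ts @ map T u @ [E \<nu>]" "length ts = n" "u \<in> NF n"
      by (auto simp: Bm_def)
    have gu: "gw (map T u)" using NF_gw[OF b(3)] by simp
    have gb: "gw (xmono ts @ map T u)" using xo_gw[OF xo_xmono] b(2) gu by simp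
    have ac: "actg (xmono ts @ map T u) \<nu> = actg (map T u) \<nu>"
      using xo_actg[OF xo_xmono] b(2) by simp
    show "GS Rs Fin (fa_word ([E \<nu>] @ b @ []))"
    proof (cases "\<nu> = actg (xmono ts @ map T u) \<nu>")
      case True
      then have "actg (map T u) \<nu> = \<nu>" using ac by simp
      then have "u = []" using NF_fix[OF b(3), of \<nu>] Ib_len[OF nu] Ib_dist[OF nu] by simp
      moreover have "sc Rs (E \<nu> # (xmono ts @ map T u) @ [E \<nu>]) ((xmono ts @ map T u) @ [E \<nu>])"
        by (rule absorb[OF gb nu True])
      ultimately have sc1: "sc Rs (E \<nu> # xmono ts @ [E \<nu>]) (xmono ts @ [E \<nu>])" by simp
      have inF: "xmono ts @ [E \<nu>] \<in> Fin" using b(2) nu by (auto simp: Fin_def)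
      show ?thesis using GS_sc[OF sc1 GS_base[OF inF]] b \<open>u = []\<close> by simp
    next
      case False
      have "kill Rs (E \<nu> # (xmono ts @ map T u) @ [E \<nu>])"
        by (rule absorb_kill[OF gb nu False])
      then show ?thesis using b GS_kill by fastforce
    qed
  qed
  then show ?thesis by simp
qed

end



lemma fa_decomp: "fin_supp f \<Longrightarrow> f = fa_sum {w. f w \<noteq> 0} (\<lambda>w. fa_smul (f w) (fa_word w :: ('i,'k::comm_ring_1) fa))"
proof
  fix v
  assume fs: "fin_supp f"
  have "fa_sum {w. f w \<noteq> 0} (\<lambda>w. fa_smul (f w) (fa_word w :: ('i,'k) fa)) v
        = (\<Sum>w\<in>{w. f w \<noteq> 0}. (if w = v then f w else 0))"
    unfolding fa_sum_def fa_smul_def fa_word_def by (rule sum.cong) auto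
  also have "\<dots> = f v" using fs unfolding fin_supp_def by (simp add: sum.delta')
  finally show "f v = fa_sum {w. f w \<noteq> 0} (\<lambda>w. fa_smul (f w) (fa_word w :: ('i,'k) fa)) v" by simp
qed

lemma fa_mul_unit_r: "fa_mul f (fa_word []) = (f :: ('i,'k::comm_ring_1) fa)"
  unfolding fa_mul_word_right by auto

lemma fa_mul_unit_l: "fa_mul (fa_word []) f = (f :: ('i,'k::comm_ring_1) fa)"
  unfolding fa_mul_word_left by auto

lemma wrap_decomp: "fin_supp f \<Longrightarrow>
  wrap p s f = fa_sum {w. f w \<noteq> 0} (\<lambda>w. fa_smul (f w) (fa_word (p @ w @ s) :: ('i,'k::comm_ring_1) fa))"
proof -
  assume fs: "fin_supp f"
  have "wrap p s f = wrap p s (fa_sum {w. f w \<noteq> 0} (\<lambda>w. fa_smul (f w) (fa_word w :: ('i,'k) fa)))"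
    using fa_decomp[OF fs] by simp
  then show ?thesis by (simp add: wrap_sum wrap_smul wrap_word)
qed

context KR begin

lemma center_GS:
  assumes cz: "in_center Rs z"
  shows "GS Rs Fin z"
proof -
  have fs: "fin_supp z" using cz unfolding in_center_def by simp
  define W where "W = {w. z w \<noteq> 0}"
  define Z where "Z p s = fa_sum W (\<lambda>w. fa_smul (z w) (fa_word (p @ w @ s)))" for p s
  have wz: "wrap p s z = Z p s" for p s unfolding Z_def W_def using wrap_decomp[OF fs] by simp
  have z0: "z = Z [] []" using wz[of "[]" "[]"] unfolding wrap_def by simp
  have central: "cg Rs (Z [E \<nu>] []) (Z [] [E \<nu>])" for \<nu>
  proof -
    have "fa_sub (fa_mul (fa_word [E \<nu>]) z) (fa_mul z (fa_word [E \<nu>])) \<in> ideal_gen Rs"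
      using cz fin_supp_word unfolding in_center_def by blast
    moreover have "fa_mul (fa_word [E \<nu>]) z = wrap [E \<nu>] [] z"
      using wrap_eq[of "[E \<nu>]" z "[]"] fa_mul_unit_r by metis
    moreover have "fa_mul z (fa_word [E \<nu>]) = wrap [] [E \<nu>] z"
      using wrap_eq[of "[]" z "[E \<nu>]"] fa_mul_unit_l by metis
    ultimately show ?thesis unfolding cg_def wz by simp
  qed
  have s1: "cg Rs (fa_word w) (fa_sum Ib (\<lambda>\<nu>. fa_word (w @ [E \<nu>])))" for w
    using cg_sym[OF cg_wrap[OF cg_sumE, of w "[]"]] by (simp add: wrap_sum wrap_word)
  have step1: "cg Rs z (fa_sum Ib (\<lambda>\<nu>. Z [] [E \<nu>]))"
  proof -
    have "cg Rs (Z [] []) (fa_sum W (\<lambda>w. fa_smul (z w) (fa_sum Ib (\<lambda>\<nu>. fa_word (w @ [E \<nu>])))))"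
      unfolding Z_def by (rule cg_sum) (simp add: cg_smul s1)
    moreover have "fa_sum W (\<lambda>w. fa_smul (z w) (fa_sum Ib (\<lambda>\<nu>. fa_word (w @ [E \<nu>]))))
        = fa_sum Ib (\<lambda>\<nu>. Z [] [E \<nu>])"
      unfolding Z_def fa_sum_def fa_smul_def
      by (auto simp: fun_eq_iff sum_distrib_left intro: sum.swap)
    ultimately show ?thesis using z0 by simp
  qed
  have step2: "GS Rs Fin (Z [] [E \<nu>])" if nu: "\<nu> \<in> Ib" for \<nu>
  proof -
    have ee: "cg Rs (fa_word (w @ [E \<nu>])) (fa_word (w @ [E \<nu>, E \<nu>]))" for w
    proof -
      have "cg Rs (fa_word [E \<nu>, E \<nu>]) (fa_word [E \<nu>])" using rel_EE[OF nu nu] by (simp add: cg_rel)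
      from cg_sym[OF cg_wrap[OF this, of w "[]"]] show ?thesis by (simp add: wrap_word)
    qed
    have a: "cg Rs (Z [] [E \<nu>]) (Z [] [E \<nu>, E \<nu>])"
      unfolding Z_def by (rule cg_sum) (simp add: cg_smul ee)
    have b: "Z [] [E \<nu>, E \<nu>] = wrap [] [E \<nu>] (Z [] [E \<nu>])"
      unfolding Z_def by (simp add: wrap_sum wrap_smul wrap_word)
    have c: "wrap [] [E \<nu>] (Z [E \<nu>] []) = Z [E \<nu>] [E \<nu>]"
      unfolding Z_def by (simp add: wrap_sum wrap_smul wrap_word)
    have d: "cg Rs (Z [] [E \<nu>]) (Z [E \<nu>] [E \<nu>])"
      using cg_trans[OF a] cg_wrap[OF cg_sym[OF central[of \<nu>]], of "[]" "[E \<nu>]"] b c by simp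
    have "GS Rs Fin (Z [E \<nu>] [E \<nu>])"
      unfolding Z_def by (rule GS_sum) (use finA[OF nu] in \<open>simp add: GS_smul\<close>)
    then show ?thesis using GS_cg[OF d] by simp
  qed
  have "GS Rs Fin (fa_sum Ib (\<lambda>\<nu>. Z [] [E \<nu>]))" by (rule GS_sum) (rule step2)
  then show ?thesis using GS_cg[OF step1] by simp
qed

end

definition repG :: "('a list \<times> nat list \<Rightarrow> 'k::comm_ring_1) \<Rightarrow> ('a list \<times> nat list) set \<Rightarrow> ('a, 'k) fa" where
  "repG c S = fa_sum S (\<lambda>(\<mu>, ts). fa_smul (c (\<mu>, ts)) (fa_word (xmono ts @ [E \<mu>])))"

lemma repG_eq: "repG c S = (\<lambda>v. \<Sum>x\<in>S. c x * fa_word (xmono (snd x) @ [E (fst x)]) v)"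
  unfolding repG_def fa_sum_def fa_smul_def by (simp add: split_beta)

lemma spn_rep:
  assumes "g \<in> spn {xmono ts @ [E \<mu>] | ts \<mu>. length ts = n \<and> \<mu> \<in> Ib}"
  shows "\<exists>S c. finite S \<and> S \<subseteq> {(\<mu>, ts). \<mu> \<in> Ib \<and> length ts = n} \<and> g = repG c S"
  using assms
proof induction
  case zero
  show ?case by (rule exI[of _ "{}"], rule exI[of _ "\<lambda>_. 0"]) (simp add: repG_eq fa_zero_def fun_eq_iff)
next
  case (base b)
  then obtain ts \<mu> where b: "b = xmono ts @ [E \<mu>]" "length ts = n" "\<mu> \<in> Ib" by blast
  show ?case
    by (rule exI[of _ "{(\<mu>, ts)}"], rule exI[of _ "\<lambda>_. 1"]) (use b in \<open>simp add: repG_eq fun_eq_iff\<close>)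
next
  case (add f g)
  then obtain S1 c1 S2 c2 where h: "finite S1" "S1 \<subseteq> {(\<mu>, ts). \<mu> \<in> Ib \<and> length ts = n}" "f = repG c1 S1"
    "finite S2" "S2 \<subseteq> {(\<mu>, ts). \<mu> \<in> Ib \<and> length ts = n}" "g = repG c2 S2" by blast
  define c where "c x = (if x \<in> S1 then c1 x else 0) + (if x \<in> S2 then c2 x else 0)" for x
  let ?F = "\<lambda>x v. fa_word (xmono (snd x) @ [E (fst x)]) v"
  have "repG c (S1 \<union> S2) = fa_add f g"
  proof (rule ext)
    fix v
    have "repG c (S1 \<union> S2) v = (\<Sum>x\<in>S1 \<union> S2. (if x \<in> S1 then c1 x * ?F x v else 0))
        + (\<Sum>x\<in>S1 \<union> S2. (if x \<in> S2 then c2 x * ?F x v else 0))"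
      unfolding repG_eq c_def sum.distrib[symmetric] by (rule sum.cong) (auto simp: distrib_right)
    also have "\<dots> = (\<Sum>x\<in>S1. c1 x * ?F x v) + (\<Sum>x\<in>S2. c2 x * ?F x v)"
    proof -
      have f: "finite (S1 \<union> S2)" using h(1,4) by simp
      have e1: "(S1 \<union> S2) \<inter> S1 = S1" "(S1 \<union> S2) \<inter> S2 = S2" by blast+
      show ?thesis
        using sum.inter_restrict[OF f, of "\<lambda>x. c1 x * ?F x v" S1]
          sum.inter_restrict[OF f, of "\<lambda>x. c2 x * ?F x v" S2] unfolding e1 by simp
    qed
    finally show "repG c (S1 \<union> S2) v = fa_add f g v" using h by (simp add: repG_eq fa_add_def)
  qed
  then show ?case using h(1,2,4,5) by (intro exI[of _ "S1 \<union> S2"] exI[of _ c]) auto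
next
  case (smul f k)
  then obtain S c where h: "finite S" "S \<subseteq> {(\<mu>, ts). \<mu> \<in> Ib \<and> length ts = n}" "f = repG c S" by blast
  have "repG (\<lambda>x. k * c x) S = fa_smul k f"
    using h by (simp add: repG_eq fa_smul_def fun_eq_iff sum_distrib_left mult.assoc)
  then show ?case using h(1,2) by (intro exI[of _ S] exI[of _ "\<lambda>x. k * c x"]) auto
qed


lemma N_add:
  fixes p q :: nat and x :: "'p::ab_group_add"
  shows "(\<Sum>_<p + q. x) = (\<Sum>_<p. x) + (\<Sum>_<q. x)"
  by (induction q) (auto simp: add.assoc)

lemma zsc_diff: "zsc (int a - int b) (x::'p::ab_group_add) = (\<Sum>_<a. x) - (\<Sum>_<b. x)"
proof (cases "b \<le> a")
  case True
  then have "zsc (int a - int b) x = (\<Sum>_<a - b. x)" by (simp add: zsc_def nat_diff_distrib)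
  also have "\<dots> = (\<Sum>_<a. x) - (\<Sum>_<b. x)" using N_add[where p=b and q="a - b" and x=x] True by simp
  finally show ?thesis .
next
  case False
  then have "zsc (int a - int b) x = - (\<Sum>_<b - a. x)" by (simp add: zsc_def nat_diff_distrib)
  also have "\<dots> = (\<Sum>_<a. x) - (\<Sum>_<b. x)" using N_add[where p=a and q="b - a" and x=x] False by simp
  finally show ?thesis .
qed

lemma sumN: "finite F \<Longrightarrow> set xs \<subseteq> F \<Longrightarrow>
  (\<Sum>i\<in>F. (\<Sum>_<count_list xs i. (\<alpha> i :: 'p::ab_group_add))) = sum_list (map \<alpha> xs)"
proof (induction xs)
  case Nil then show ?case by simp
next
  case (Cons x xs)
  have "(\<Sum>i\<in>F. (\<Sum>_<count_list (x # xs) i. \<alpha> i))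
      = (\<Sum>i\<in>F. (\<Sum>_<count_list xs i. \<alpha> i) + (if x = i then \<alpha> i else 0))"
    by (rule sum.cong) auto
  also have "\<dots> = (\<Sum>i\<in>F. (\<Sum>_<count_list xs i. \<alpha> i)) + \<alpha> x"
    using Cons.prems by (simp add: sum.distrib sum.delta)
  finally show ?case using Cons by (simp add: add.commute)
qed

lemma count_distinct: "distinct xs \<Longrightarrow> count_list xs i \<le> 1"
  by (induction xs) auto

lemma not_distinct_count: "\<not> distinct xs \<Longrightarrow> \<exists>i. count_list xs i \<ge> 2"
proof -
  assume "\<not> distinct xs"
  then obtain as bs cs y where "xs = as @ [y] @ bs @ [y] @ cs" using not_distinct_decomp by blast
  then have "count_list xs y \<ge> 2" by simp
  then show ?thesis by blast
qed

theorem lemma5p5: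
  fixes A :: "'i \<Rightarrow> 'i \<Rightarrow> int" and d :: "'i \<Rightarrow> int"
    and \<alpha> :: "'i \<Rightarrow> 'p::ab_group_add" and h :: "'i \<Rightarrow> 'p \<Rightarrow> int"
    and form :: "'p \<Rightarrow> 'p \<Rightarrow> int" and podd :: "'i \<Rightarrow> bool"
    and t :: "'i \<Rightarrow> 'i \<Rightarrow> nat \<Rightarrow> nat \<Rightarrow> 'k::field"
    and \<Lambda> :: 'p and js :: "'i list" and z :: "'i gen list \<Rightarrow> 'k"
  assumes char: "(2::'k) \<noteq> 0"
    and cartan_diag: "\<And>i. A i i = 2"
    and cartan_off: "\<And>i j. i \<noteq> j \<Longrightarrow> A i j \<le> 0"
    and cartan_zero: "\<And>i j. A i j = 0 \<longleftrightarrow> A j i = 0"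
    and d_pos: "\<And>i. d i > 0"
    and symm: "\<And>i j. d i * A i j = d j * A j i"
    and alpha_indep: "\<And>F c. finite F \<Longrightarrow> (\<Sum>i\<in>F. zsc (c i) (\<alpha> i)) = 0 \<Longrightarrow> \<forall>i\<in>F. c i = 0"
    and h_add: "\<And>i x y. h i (x + y) = h i x + h i y"
    and h_alpha: "\<And>i j. h i (\<alpha> j) = A i j"
    and odd_even: "\<And>i j. podd i \<Longrightarrow> even (A i j)"
    and form_sym: "\<And>x y. form x y = form y x"
    and form_add: "\<And>x y w. form (x + y) w = form x w + form y w"
    and form_alpha: "\<And>i x. form (\<alpha> i) x = d i * h i x"
    and t_deg: "\<And>i j r s. t i j r s \<noteq> 0 \<Longrightarrow>
        - 2 * form (\<alpha> i) (\<alpha> j) - int r * form (\<alpha> i) (\<alpha> i) - int s * form (\<alpha> j) (\<alpha> j) = 0"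
    and t_sym: "\<And>i j r s. t i j r s = t j i s r"
    and t_unit: "\<And>i j. i \<noteq> j \<Longrightarrow> t i j (nat (- A i j)) 0 \<noteq> 0"
    and t_diag: "\<And>i r s. t i i r s = 0"
    and t_odd: "\<And>i j r s. podd i \<Longrightarrow> odd r \<Longrightarrow> t i j r s = 0"
    and dominant: "\<And>i. h i \<Lambda> \<ge> 0"
    and distinct_js: "distinct js"
    and central: "in_center
        (cyc_rels podd t (length js)
           {\<nu>. length \<nu> = length js \<and> sum_list (map \<alpha> \<nu>) = sum_list (map \<alpha> js)}
           (\<lambda>i. nat (h i \<Lambda>))) z"
  shows "\<exists>S c. finite S \<and>
     S \<subseteq> {(\<mu>, ts). length \<mu> = length js \<and> sum_list (map \<alpha> \<mu>) = sum_list (map \<alpha> js)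
                  \<and> length ts = length js} \<and>
     fa_sub z (fa_sum S (\<lambda>(\<mu>, ts). fa_smul (c (\<mu>, ts)) (fa_word (xmono ts @ [E \<mu>]))))
       \<in> ideal_gen (cyc_rels podd t (length js)
           {\<nu>. length \<nu> = length js \<and> sum_list (map \<alpha> \<nu>) = sum_list (map \<alpha> js)}
           (\<lambda>i. nat (h i \<Lambda>)))"
proof -
  let ?n = "length js"
  let ?Ib = "{\<nu>. length \<nu> = length js \<and> sum_list (map \<alpha> \<nu>) = sum_list (map \<alpha> js)}"
  let ?lam = "\<lambda>i. nat (h i \<Lambda>)"
  have dist: "distinct \<nu>" if nu: "\<nu> \<in> ?Ib" for \<nu>
  proof (rule ccontr)
    assume nd: "\<not> distinct \<nu>"
    define F where "F = set \<nu> \<union> set js"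
    define c where "c i = int (count_list \<nu> i) - int (count_list js i)" for i
    have fF: "finite F" by (simp add: F_def)
    have "(\<Sum>i\<in>F. zsc (c i) (\<alpha> i)) = (\<Sum>i\<in>F. (\<Sum>_<count_list \<nu> i. \<alpha> i)) - (\<Sum>i\<in>F. (\<Sum>_<count_list js i. \<alpha> i))"
      unfolding c_def by (simp add: zsc_diff sum_subtractf)
    also have "\<dots> = 0" using sumN[OF fF, of \<nu> \<alpha>] sumN[OF fF, of js \<alpha>] nu by (simp add: F_def)
    finally have "\<forall>i\<in>F. c i = 0" using alpha_indep[OF fF] by blast
    moreover obtain i where i: "count_list \<nu> i \<ge> 2" using not_distinct_count[OF nd] by blast
    moreover have "i \<in> F"
    proof (rule ccontr)
      assume "i \<notin> F"
      then have "count_list \<nu> i = 0" by (simp add: F_def)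
      with i show False by simp
    qed
    ultimately have "count_list js i \<ge> 2" by (simp add: c_def)
    then show False using count_distinct[OF distinct_js, of i] by simp
  qed
  have swp_in: "swp a \<nu> \<in> ?Ib" if nu: "\<nu> \<in> ?Ib" and a: "1 \<le> a" "a + 1 \<le> ?n" for \<nu> a
  proof -
    have l: "length \<nu> = ?n" using nu by simp
    have m: "mset (swp a \<nu>) = mset \<nu>"
      unfolding swp_def using mset_swap[of a \<nu> "a - 1"] l a by simp
    have "sum_list (map \<alpha> (swp a \<nu>)) = sum_list (map \<alpha> \<nu>)"
      by (metis m mset_map sum_mset_sum_list)
    then show ?thesis using nu by simp
  qed
  interpret K: KR podd t ?n ?Ib ?lam
    apply unfold_locales
      apply simp
     apply (erule dist)
    apply (erule swp_in; assumption)
    done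
  obtain g where g: "g \<in> spn K.Fin" "cg (cyc_rels podd t ?n ?Ib ?lam) z g"
    using K.center_GS[OF central] unfolding GS_def by blast
  have gF: "g \<in> spn {xmono ts @ [E \<mu>] | ts \<mu>. length ts = ?n \<and> \<mu> \<in> ?Ib}"
    using g(1) unfolding K.Fin_def .
  obtain S c where S: "finite S" "S \<subseteq> {(\<mu>, ts). \<mu> \<in> ?Ib \<and> length ts = ?n}" "g = repG c S"
    using spn_rep[OF gF] by (elim exE conjE) blast
  have 1: "S \<subseteq> {(\<mu>, ts). length \<mu> = length js \<and> sum_list (map \<alpha> \<mu>) = sum_list (map \<alpha> js)
                  \<and> length ts = length js}"
    using S(2) by fastforce
  have 2: "fa_sub z (fa_sum S (\<lambda>(\<mu>, ts). fa_smul (c (\<mu>, ts)) (fa_word (xmono ts @ [E \<mu>]))))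
       \<in> ideal_gen (cyc_rels podd t ?n ?Ib ?lam)"
    using g(2) unfolding cg_def S(3) repG_def .
  show ?thesis by (intro exI[of _ S] exI[of _ c] conjI S(1) 1 2)
qed

end
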